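(* Suppose the weight function $w$ satisfies $0<m\le w\le M$ almost everywhere. Then there exists an absolute constant $C>0$ such that for every $n\ge1$ and every $-1<x<1$, $$\lambda_x(-1)\le C\frac{M^2}{m}\cdot\frac{1}{n^2}\quad\text{and}\quad\lambda_x(1)\le C\frac{M^2}{m}\cdot\frac1{n^2}.$$
   Context: A weight function is a non-negative integrable function $w$ on $[-1,1]$ with nonzero integral. Fix $n\ge1$. Let $\varphi$ be the orthonormal polynomial of degree $n$ with positive leading coefficient w.r.t. $w(t)\,dt$ on $[-1,1]$ and $\psi$ the orthonormal polynomial of degree $n-1$ with positive leading coefficient w.r.t. $(1-t^2)w(t)\,dt$. For real $a$ let $P_a(t)=\varphi(t)-a(1-t)\psi(t)$ if $a\ge0$, $P_a(t)=\varphi(t)-a(1+t)\psi(t)$ if $a\le0$; its zeros are $-1<\xi_1(a)<\dots<\xi_n(a)<1$. The zeros of $(1-t^2)\psi(t)$ are $-1=\eta_0<\eta_1<\dots<\eta_n=1$. The following node sets each carry a unique quadrature formula with positive weights exact for all polynomials of degree $\le 2n-1$ with respect to $w$: $\{\xi_i(0)\}_{i=1}^n$; $\{\eta_0,\dots,\eta_n\}$; $\{-1\}\cup\{\xi_i(a)\}_i$ for $0<a<\infty$; $\{\xi_i(a)\}_i\cup\{1\}$ for $-\infty<a<0$. Each $x\in(-1,1)$ is a node of exactly one of them, denoted $\Sigma_x$; $\lambda_x(u)$ is the weight of $u$ in $\Sigma_x$ (and $0$ if $u$ is not a node of $\Sigma_x$). *)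

theory Defs
  imports "HOL-Analysis.Analysis" "HOL-Computational_Algebra.Polynomial"
begin

definition wint :: "(real \<Rightarrow> real) \<Rightarrow> real" where
  "wint f = (LINT t:{-1..1}|lborel. f t)"

definition weight_function :: "(real \<Rightarrow> real) \<Rightarrow> bool" where
  "weight_function w \<longleftrightarrow> (\<forall>t\<in>{-1..1}. 0 \<le> w t) \<and> set_integrable lborel {-1..1} w
     \<and> wint w \<noteq> 0"

definition orthonormal_poly :: "(real \<Rightarrow> real) \<Rightarrow> nat \<Rightarrow> real poly" where
  "orthonormal_poly v k = (THE p. degree p = k \<and> lead_coeff p > 0 \<and>
      (\<forall>q. degree q < k \<longrightarrow> wint (\<lambda>t. poly p t * poly q t * v t) = 0) \<and>
      wint (\<lambda>t. (poly p t)^2 * v t) = 1)"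

definition phi_poly :: "(real \<Rightarrow> real) \<Rightarrow> nat \<Rightarrow> real poly" where
  "phi_poly w n = orthonormal_poly w n"

definition psi_poly :: "(real \<Rightarrow> real) \<Rightarrow> nat \<Rightarrow> real poly" where
  "psi_poly w n = orthonormal_poly (\<lambda>t. (1 - t^2) * w t) (n - 1)"

definition P_poly :: "(real \<Rightarrow> real) \<Rightarrow> nat \<Rightarrow> real \<Rightarrow> real poly" where
  "P_poly w n a = (if a \<ge> 0 then phi_poly w n - smult a ([:1, -1:] * psi_poly w n)
                   else phi_poly w n - smult a ([:1, 1:] * psi_poly w n))"

definition zero_set :: "real poly \<Rightarrow> real set" where
  "zero_set p = {t. poly p t = 0}"

definition node_sets :: "(real \<Rightarrow> real) \<Rightarrow> nat \<Rightarrow> real set set" where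
  "node_sets w n =
     {zero_set (phi_poly w n)}
     \<union> {zero_set ([:1, 0, -1:] * psi_poly w n)}
     \<union> {insert (-1) (zero_set (P_poly w n a)) | a. 0 < a}
     \<union> {insert 1 (zero_set (P_poly w n a)) | a. a < 0}"

definition Sigma :: "(real \<Rightarrow> real) \<Rightarrow> nat \<Rightarrow> real \<Rightarrow> real set" where
  "Sigma w n x = (THE S. S \<in> node_sets w n \<and> x \<in> S)"

definition quad_weights :: "(real \<Rightarrow> real) \<Rightarrow> nat \<Rightarrow> real set \<Rightarrow> real \<Rightarrow> real" where
  "quad_weights w n S = (THE l. (\<forall>u. u \<notin> S \<longrightarrow> l u = 0) \<and>
      (\<forall>p. degree p \<le> 2 * n - 1 \<longrightarrow> (\<Sum>u\<in>S. l u * poly p u) = wint (\<lambda>t. poly p t * w t)))"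

definition lambda_x :: "(real \<Rightarrow> real) \<Rightarrow> nat \<Rightarrow> real \<Rightarrow> real \<Rightarrow> real" where
  "lambda_x w n x u = quad_weights w n (Sigma w n x) u"

end

theory Submission
  imports Defs
begin

lemma set_integrable_times_x:
  assumes "set_integrable lborel {-1..1::real} f"
  shows "set_integrable lborel {-1..1} (\<lambda>t. t * f t)"
proof -
  have m: "(\<lambda>x. indicator {-1..1::real} x *\<^sub>R f x) \<in> borel_measurable lborel"
    using assms unfolding set_integrable_def by (rule borel_measurable_integrable)
  show ?thesis unfolding set_integrable_def
  proof (rule Bochner_Integration.integrable_bound[where f="\<lambda>x. indicator {-1..1::real} x *\<^sub>R f x"])
    show "integrable lborel (\<lambda>x. indicator {-1..1::real} x *\<^sub>R f x)" using assms unfolding set_integrable_def .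
    have "(\<lambda>x. indicator {-1..1::real} x *\<^sub>R (x * f x)) = (\<lambda>x. x * (indicator {-1..1::real} x *\<^sub>R f x))"
      by auto
    then show "(\<lambda>x. indicator {-1..1::real} x *\<^sub>R (x * f x)) \<in> borel_measurable lborel"
      using m by simp
    show "AE x in lborel. norm (indicator {-1..1::real} x *\<^sub>R (x * f x)) \<le> norm (indicator {-1..1::real} x *\<^sub>R f x)"
      by (auto simp: indicator_def abs_mult intro!: mult_left_le_one_le)
  qed
qed

lemma set_integrable_poly_mult:
  assumes "set_integrable lborel {-1..1::real} v"
  shows "set_integrable lborel {-1..1} (\<lambda>t. poly p t * v t)"
proof (induction p)
  case 0 then show ?case by (simp add: set_integrable_def)
next
  case (pCons a p)
  have "(\<lambda>t. poly (pCons a p) t * v t) = (\<lambda>t. a * v t + t * (poly p t * v t))"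
    by (auto simp: algebra_simps)
  moreover have "set_integrable lborel {-1..1} (\<lambda>t. a * v t + t * (poly p t * v t))"
    by (rule set_integral_add(1)) (auto intro: assms set_integrable_times_x pCons.IH)
  ultimately show ?case by simp
qed

definition Iw :: "(real \<Rightarrow> real) \<Rightarrow> real poly \<Rightarrow> real" where
  "Iw v p = wint (\<lambda>t. poly p t * v t)"

locale wt =
  fixes v :: "real \<Rightarrow> real"
  assumes vint: "set_integrable lborel {-1..1::real} v"
  and vnn: "\<And>t. t \<in> {-1..1} \<Longrightarrow> 0 \<le> v t"
  and vpos: "AE t in lborel. t \<in> {-1..1} \<longrightarrow> 0 < v t"
begin

lemma pint: "set_integrable lborel {-1..1} (\<lambda>t. poly p t * v t)"
  by (rule set_integrable_poly_mult[OF vint])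

lemma I_add: "Iw v (p + q) = Iw v p + Iw v q"
proof -
  have "Iw v (p + q) = wint (\<lambda>t. poly p t * v t + poly q t * v t)"
    unfolding Iw_def by (simp add: algebra_simps)
  also have "\<dots> = Iw v p + Iw v q" unfolding Iw_def wint_def
    by (rule set_integral_add(2)[OF pint pint])
  finally show ?thesis .
qed

lemma I_smult: "Iw v (smult c p) = c * Iw v p"
proof -
  have "Iw v (smult c p) = wint (\<lambda>t. c * (poly p t * v t))"
    unfolding Iw_def by (simp add: algebra_simps)
  also have "\<dots> = c * Iw v p" unfolding Iw_def wint_def
    by (rule set_integral_mult_right)
  finally show ?thesis .
qed

lemma I_0[simp]: "Iw v 0 = 0"
  unfolding Iw_def wint_def by simp

lemma I_minus: "Iw v (- p) = - Iw v p"
  using I_smult[of "-1" p] by simp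

lemma I_diff: "Iw v (p - q) = Iw v p - Iw v q"
  using I_add[of p "-q"] I_minus[of q] by simp

lemma I_sum: "Iw v (\<Sum>i\<in>A. f i) = (\<Sum>i\<in>A. Iw v (f i))"
  by (induction A rule: infinite_finite_induct) (auto simp: I_add)

lemma I_nonneg:
  assumes "\<And>t. t \<in> {-1<..<1} \<Longrightarrow> 0 \<le> poly g t"
  shows "0 \<le> Iw v g"
  unfolding Iw_def wint_def set_lebesgue_integral_def
proof (rule integral_nonneg_AE)
  show "AE x in lborel. 0 \<le> indicat_real {- 1..1} x *\<^sub>R (poly g x * v x)"
    using AE_lborel_singleton[of "-1::real"] AE_lborel_singleton[of "1::real"]
  proof eventually_elim
    case (elim x)
    then show ?case using assms[of x] vnn[of x]
      by (auto simp: indicator_def)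
  qed
qed

lemma I_pos:
  assumes "\<And>t. t \<in> {-1<..<1} \<Longrightarrow> 0 \<le> poly g t" and "g \<noteq> 0"
  shows "0 < Iw v g"
proof (rule ccontr)
  assume "\<not> 0 < Iw v g"
  with I_nonneg[OF assms(1)] have z: "Iw v g = 0" by simp
  let ?f = "\<lambda>x. indicat_real {- 1..1} x *\<^sub>R (poly g x * v x)"
  have nn: "AE x in lborel. 0 \<le> ?f x"
    using AE_lborel_singleton[of "-1::real"] AE_lborel_singleton[of "1::real"]
  proof eventually_elim
    case (elim x)
    then show ?case using assms(1)[of x] vnn[of x]
      by (auto simp: indicator_def)
  qed
  have "integral\<^sup>L lborel ?f = 0" using z unfolding Iw_def wint_def set_lebesgue_integral_def .
  then have ae0: "AE x in lborel. ?f x = 0"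
    using integral_nonneg_eq_0_iff_AE[OF pint[unfolded set_integrable_def] nn] by simp
  have fin: "finite {x. poly g x = 0}" using poly_roots_finite[OF assms(2)] .
  have "AE x in lborel. x \<notin> {x. poly g x = 0}"
    by (rule AE_not_in[OF finite_imp_null_set_lborel[OF fin]])
  with ae0 vpos have "AE x in lborel. x \<notin> {-1<..<1::real}"
  proof eventually_elim
    case (elim x)
    then show ?case by (auto simp: indicator_def split: if_splits)
  qed
  then have "emeasure lborel {-1<..<1::real} = 0"
    by (subst (asm) AE_iff_measurable[of "{-1<..<1::real}"]) auto
  then show False by simp
qed

end


lemma degree_sub_lead_less:
  fixes p q :: "real poly"
  assumes "degree q \<le> k" "degree p = k" "p \<noteq> 0"
  shows "q - smult (coeff q k / lead_coeff p) p = 0 \<or> degree (q - smult (coeff q k / lead_coeff p) p) < k"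
proof -
  let ?d = "q - smult (coeff q k / lead_coeff p) p"
  have le: "degree ?d \<le> k"
    using assms by (intro degree_diff_le) (auto simp: degree_smult_le order.trans[OF degree_smult_le])
  have ck: "coeff ?d k = 0" using assms by auto
  show ?thesis
  proof (cases "?d = 0")
    case False
    have "degree ?d \<noteq> k"
    proof
      assume "degree ?d = k"
      then have "lead_coeff ?d = 0" using ck by simp
      then show False using False leading_coeff_0_iff by blast
    qed
    then show ?thesis using le by simp
  qed simp
qed

definition orth :: "(real \<Rightarrow> real) \<Rightarrow> nat \<Rightarrow> real poly \<Rightarrow> bool" where
  "orth v k p \<longleftrightarrow> degree p = k \<and> lead_coeff p > 0 \<and>
      (\<forall>q. degree q < k \<longrightarrow> Iw v (p * q) = 0) \<and> Iw v (p * p) = 1"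

lemma orth_eq_def: "orth v k p \<longleftrightarrow> (degree p = k \<and> lead_coeff p > 0 \<and>
      (\<forall>q. degree q < k \<longrightarrow> wint (\<lambda>t. poly p t * poly q t * v t) = 0) \<and>
      wint (\<lambda>t. (poly p t)^2 * v t) = 1)"
  unfolding orth_def Iw_def by (simp add: power2_eq_square)

context wt begin

lemma orth_zero: "orth v k p \<Longrightarrow> q = 0 \<or> degree q < k \<Longrightarrow> Iw v (p * q) = 0"
  unfolding orth_def by auto

lemma orth_ne0: "orth v k p \<Longrightarrow> p \<noteq> 0"
  unfolding orth_def by auto

lemma orth_ip:
  assumes "orth v k p" "degree q \<le> k"
  shows "Iw v (p * q) = coeff q k / lead_coeff p"
proof -
  let ?c = "coeff q k / lead_coeff p"
  let ?d = "q - smult ?c p"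
  have p0: "p \<noteq> 0" "degree p = k" using assms unfolding orth_def by auto
  have "q = smult ?c p + ?d" by simp
  then have "Iw v (p * q) = Iw v (smult ?c (p * p)) + Iw v (p * ?d)"
  proof -
    have "p * q = smult ?c (p * p) + p * ?d" by (simp add: algebra_simps)
    then show ?thesis by (simp only: I_add)
  qed
  also have "Iw v (p * ?d) = 0"
    by (rule orth_zero[OF assms(1) degree_sub_lead_less[OF assms(2) p0(2) p0(1)]])
  also have "Iw v (smult ?c (p * p)) = ?c" using assms(1) unfolding orth_def by (simp add: I_smult)
  finally show ?thesis by simp
qed

lemma orth_unique:
  assumes "orth v k p" "orth v k p'"
  shows "p = p'"
proof -
  have lp: "lead_coeff p > 0" "lead_coeff p' > 0" "degree p = k" "degree p' = k"
    using assms unfolding orth_def by auto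
  have "Iw v (p * p') = lead_coeff p' / lead_coeff p"
    using orth_ip[OF assms(1), of p'] lp by simp
  moreover have "Iw v (p' * p) = lead_coeff p / lead_coeff p'"
    using orth_ip[OF assms(2), of p] lp by simp
  ultimately have "lead_coeff p' / lead_coeff p = lead_coeff p / lead_coeff p'"
    by (simp add: mult.commute)
  then have "lead_coeff p' * lead_coeff p' = lead_coeff p * lead_coeff p"
    using lp by (simp add: field_simps)
  then have eql: "lead_coeff p' = lead_coeff p" using lp
  proof -
    have "(lead_coeff p' - lead_coeff p) * (lead_coeff p' + lead_coeff p) = 0"
      using \<open>lead_coeff p' * lead_coeff p' = lead_coeff p * lead_coeff p\<close> by (simp add: algebra_simps)
    then show ?thesis using lp by simp
  qed
  let ?d = "p - p'"
  have dd: "?d = 0 \<or> degree ?d < k"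
  proof -
    have "p' - smult (coeff p' k / lead_coeff p) p = p' - p" using lp eql by simp
    then have h: "p' - p = 0 \<or> degree (p' - p) < k"
      using degree_sub_lead_less[of p' k p] lp orth_ne0[OF assms(1)] by auto
    have e: "p - p' = - (p' - p)" by simp
    show ?thesis using h unfolding e degree_minus by auto
  qed
  have "Iw v (?d * ?d) = Iw v (p * ?d) - Iw v (p' * ?d)"
    by (simp only: left_diff_distrib I_diff)
  also have "\<dots> = 0" using orth_zero[OF assms(1) dd] orth_zero[OF assms(2) dd] by simp
  finally have "Iw v (?d * ?d) = 0" .
  moreover have "?d \<noteq> 0 \<Longrightarrow> 0 < Iw v (?d * ?d)"
    by (rule I_pos) auto
  ultimately show ?thesis by force
qed

lemma span_zero:
  assumes P: "\<And>i. i \<le> k \<Longrightarrow> degree (P i) = i \<and> P i \<noteq> 0"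
  and r: "\<And>i. i \<le> k \<Longrightarrow> Iw v (r * P i) = 0"
  shows "degree q \<le> k \<Longrightarrow> Iw v (r * q) = 0"
proof (induction "degree q" arbitrary: q rule: less_induct)
  case less
  show ?case
  proof (cases "q = 0")
    case False
    define d where "d = degree q"
    let ?c = "coeff q d / lead_coeff (P d)"
    let ?q' = "q - smult ?c (P d)"
    have dk: "d \<le> k" using less d_def by simp
    have h: "?q' = 0 \<or> degree ?q' < d"
      by (rule degree_sub_lead_less) (use P[OF dk] d_def in auto)
    have e: "Iw v (r * q) = ?c * Iw v (r * P d) + Iw v (r * ?q')"
    proof -
      have "r * q = smult ?c (r * P d) + r * ?q'" by (simp add: algebra_simps)
      then show ?thesis by (simp only: I_add I_smult)
    qed
    have "Iw v (r * ?q') = 0"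
    proof (cases "?q' = 0")
      case False
      then have "degree ?q' < degree q" using h d_def by auto
      then show ?thesis using less(1)[of ?q'] less(2) by auto
    qed simp
    then show ?thesis using e r[OF dk] by simp
  qed simp
qed

lemma orth_exists_all: "\<exists>P. \<forall>j\<le>k. orth v j (P j)"
proof (induction k)
  case 0
  have "Iw v (1 * 1) > 0" by (rule I_pos) auto
  define c where "c = Iw v (1 * 1)"
  define p where "p = [: 1 / sqrt c :]"
  have c: "c > 0" using \<open>Iw v (1 * 1) > 0\<close> c_def by simp
  have "Iw v (p * p) = (1/sqrt c) * (1/sqrt c) * c"
    unfolding p_def c_def by (simp add: I_smult flip: smult_one) 
  also have "\<dots> = 1" using c by (simp add: field_simps)
  finally have "orth v 0 p" unfolding orth_def p_def using c by simp
  then show ?case by (intro exI[of _ "\<lambda>_. p"]) simp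
next
  case (Suc k)
  then obtain P where P: "\<And>j. j \<le> k \<Longrightarrow> orth v j (P j)" by blast
  define c where "c j = Iw v (monom 1 (Suc k) * P j)" for j
  define r where "r = monom 1 (Suc k) - (\<Sum>j\<le>k. smult (c j) (P j))"
  have Pd: "degree (P j) = j" if "j \<le> k" for j using P[OF that] unfolding orth_def by blast
  have degs: "degree (\<Sum>j\<le>k. smult (c j) (P j)) \<le> k"
  proof (rule degree_sum_le)
    fix j assume "j \<in> {..k}"
    then show "degree (smult (c j) (P j)) \<le> k" using degree_smult_le[of "c j" "P j"] Pd[of j] by simp
  qed simp
  have cs: "coeff (\<Sum>j\<le>k. smult (c j) (P j)) (Suc k) = 0"
    by (rule coeff_eq_0) (use degs in simp)
  have rcoeff: "coeff r (Suc k) = 1" unfolding r_def coeff_diff cs by simp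
  have rdeg: "degree r = Suc k"
  proof (rule antisym)
    show "degree r \<le> Suc k" unfolding r_def
      by (rule degree_diff_le) (use degs in \<open>auto simp: degree_monom_le\<close>)
    show "Suc k \<le> degree r" using rcoeff by (intro le_degree) simp
  qed
  have r0: "r \<noteq> 0" using rcoeff by auto
  have lr: "lead_coeff r = 1" using rcoeff rdeg by simp
  have PP: "Iw v (P j * P i) = (if i = j then 1 else 0)" if "i \<le> k" "j \<le> k" for i j
  proof (cases "i = j")
    case True then show ?thesis using P[OF that(1)] unfolding orth_def by simp
  next
    case False
    show ?thesis
    proof (cases "i < j")
      case True
      then show ?thesis using False orth_zero[OF P[OF that(2)], of "P i"] P[OF that(1)] unfolding orth_def by auto
    next
      case f2: False
      then have "Iw v (P i * P j) = 0" using False orth_zero[OF P[OF that(1)], of "P j"] P[OF that(2)] unfolding orth_def by auto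
      then show ?thesis using False by (simp add: mult.commute)
    qed
  qed
  have rP: "Iw v (r * P i) = 0" if "i \<le> k" for i
  proof -
    have "r * P i = monom 1 (Suc k) * P i - (\<Sum>j\<le>k. smult (c j) (P j * P i))"
      unfolding r_def by (simp add: left_diff_distrib sum_distrib_right mult_smult_left)
    then have "Iw v (r * P i) = Iw v (monom 1 (Suc k) * P i) - (\<Sum>j\<le>k. c j * Iw v (P j * P i))"
      by (simp add: I_diff I_sum I_smult)
    also have "Iw v (monom 1 (Suc k) * P i) = c i" unfolding c_def by (simp add: mult.commute)
    also have "(\<Sum>j\<le>k. c j * Iw v (P j * P i)) = (\<Sum>j\<le>k. if j = i then c j else 0)"
      by (rule sum.cong) (auto simp: PP that)
    also have "\<dots> = c i" using that by simp
    finally show ?thesis by simp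
  qed
  have rq: "Iw v (r * q) = 0" if "degree q < Suc k" for q
    by (rule span_zero[of k P]) (use Pd rP that orth_ne0[OF P] in auto)
  have pos: "Iw v (r * r) > 0" by (rule I_pos) (auto simp: r0)
  define p where "p = smult (1 / sqrt (Iw v (r * r))) r"
  have "orth v (Suc k) p"
    unfolding orth_def
  proof (intro conjI allI impI)
    show "degree p = Suc k" using pos rdeg by (simp add: p_def)
    show "lead_coeff p > 0" using pos lr by (simp add: p_def)
    show "Iw v (p * q) = 0" if "degree q < Suc k" for q
      using rq[OF that] by (simp add: p_def I_smult)
    have "Iw v (p * p) = (1 / sqrt (Iw v (r * r))) * (1 / sqrt (Iw v (r * r))) * Iw v (r * r)"
      by (simp add: p_def I_smult mult_smult_right mult_smult_left)
    also have "\<dots> = 1" using pos by (simp add: field_simps)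
    finally show "Iw v (p * p) = 1" .
  qed
  then show ?case using P by (intro exI[of _ "P(Suc k := p)"]) auto
qed

lemma orth_exists: "\<exists>p. orth v k p"
  using orth_exists_all[of k] by auto

lemma orthonormal_poly_orth: "orth v k (orthonormal_poly v k)"
proof -
  obtain p where p: "orth v k p" using orth_exists by blast
  have "orth v k (THE p. orth v k p)"
    by (rule theI[of "orth v k"]) (use p orth_unique in blast)+
  then show ?thesis unfolding orthonormal_poly_def orth_eq_def[symmetric] .
qed

end

lemma prod_lin_ne0: "(\<Prod>z\<in>Z. [:-z, 1::real:]) \<noteq> 0"
  by (cases "finite Z") (auto simp: prod_zero_iff)

lemma degree_prod_lin: "finite Z \<Longrightarrow> degree (\<Prod>z\<in>Z. [:-z, 1::real:]) = card Z"
  by (subst degree_prod_eq_sum_degree) auto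

lemma lead_prod_lin: "lead_coeff (\<Prod>z\<in>Z. [:-z, 1::real:]) = 1"
  by (simp add: lead_coeff_prod)

lemma poly_prod_lin: "poly (\<Prod>z\<in>Z. [:-z, 1::real:]) t = (\<Prod>z\<in>Z. t - z)"
  by (simp add: poly_prod)

lemma order_prod_lin:
  assumes "finite Z"
  shows "order a (\<Prod>z\<in>Z. [:-z, 1::real:]) = (if a \<in> Z then 1 else 0)"
  using assms
proof (induction Z rule: finite_induct)
  case empty
  then show ?case by (simp add: order_0I)
next
  case (insert x F)
  have pe: "(\<Prod>z\<in>insert x F. [:-z, 1::real:]) = [:-x, 1:] * (\<Prod>z\<in>F. [:-z, 1::real:])"
    by (simp only: prod.insert[OF insert(1,2)])
  have "order a (\<Prod>z\<in>insert x F. [:-z, 1::real:]) = order a [:-x, 1:] + order a (\<Prod>z\<in>F. [:-z, 1::real:])"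
  proof -
    have "[:-x, 1::real:] \<noteq> 0" by simp
    then have "[:-x, 1::real:] * (\<Prod>z\<in>F. [:-z, 1::real:]) \<noteq> 0"
      using prod_lin_ne0[of F] mult_eq_0_iff by blast
    then show ?thesis unfolding pe by (rule order_mult)
  qed
  moreover have "order a [:-x, 1:] = (if a = x then 1 else 0)"
    using order_power_n_n[of a 1] by (auto intro!: order_0I)
  ultimately show ?case using insert by auto
qed

lemma order_sq_lin: "order y ([:-z, 1::real:]^2) = (if y = z then 2 else 0)"
  using order_power_n_n[of y 2] by (auto intro!: order_0I)

lemma const_sign:
  fixes f :: "real poly"
  assumes "f \<noteq> 0" "\<And>z. z \<in> {-1<..<1} \<Longrightarrow> poly f z = 0 \<Longrightarrow> even (order z f)"
  shows "(\<forall>t\<in>{-1<..<1}. 0 \<le> poly f t) \<or> (\<forall>t\<in>{-1<..<1}. poly f t \<le> 0)"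
  using assms
proof (induction "degree f" arbitrary: f rule: less_induct)
  case less
  show ?case
  proof (cases "\<exists>z\<in>{-1<..<1}. poly f z = 0")
    case True
    then obtain z where z: "z \<in> {-1<..<1}" "poly f z = 0" by blast
    have "order z f \<noteq> 0" using z less(2) order_root by blast
    with less(3)[OF z] have "2 \<le> order z f" by presburger
    then have "[:-z, 1:]^2 dvd f" using order_divides by blast
    then obtain g where g: "f = [:-z, 1:]^2 * g" by (auto elim: dvdE)
    have g0: "g \<noteq> 0" using g less(2) by auto
    have dg: "degree f = 2 + degree g" using g g0 by (simp add: degree_mult_eq degree_power_eq)
    have ev: "even (order y g)" if "y \<in> {-1<..<1}" "poly g y = 0" for y
    proof -
      have "poly f y = 0" using g that by simp
      then have "even (order y f)" using less(3) that by blast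
      moreover have "order y f = order y ([:-z, 1:]^2) + order y g"
        using g less(2) by (simp add: order_mult)
      ultimately show ?thesis by (simp add: order_sq_lin split: if_splits)
    qed
    have "(\<forall>t\<in>{-1<..<1}. 0 \<le> poly g t) \<or> (\<forall>t\<in>{-1<..<1}. poly g t \<le> 0)"
      by (rule less(1)) (use dg g0 ev in auto)
    moreover have "poly f t = (t - z)^2 * poly g t" for t using g by simp
    ultimately show ?thesis
      by (auto intro: mult_nonneg_nonneg mult_nonneg_nonpos)
  next
    case False
    show ?thesis
    proof (rule ccontr)
      assume "\<not> ?thesis"
      then obtain t1 t2 where t: "t1 \<in> {-1<..<1}" "t2 \<in> {-1<..<1}" "poly f t1 < 0" "poly f t2 > 0"
        by (auto simp: not_le)
      have "t1 \<noteq> t2" using t by auto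
      then consider "t1 < t2" | "t2 < t1" by linarith
      then obtain x where "x \<in> {-1<..<1}" "poly f x = 0"
      proof cases
        case 1
        from poly_IVT_pos[OF 1 t(3) t(4)] obtain x where "t1 < x" "x < t2" "poly f x = 0" by blast
        then show ?thesis using that[of x] t by auto
      next
        case 2
        from poly_IVT_neg[OF 2 t(4) t(3)] obtain x where "t2 < x" "x < t1" "poly f x = 0" by blast
        then show ?thesis using that[of x] t by auto
      qed
      then show False using False by blast
    qed
  qed
qed

lemma prod_lin_dvd:
  fixes p :: "real poly"
  assumes "finite Z" "\<And>z. z \<in> Z \<Longrightarrow> poly p z = 0"
  shows "(\<Prod>z\<in>Z. [:-z, 1:]) dvd p"
  using assms
proof (induction Z arbitrary: p rule: finite_induct)
  case empty then show ?case by simp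
next
  case (insert x F)
  have "[:-x, 1:] dvd p" using insert(4)[of x] by (simp add: poly_eq_0_iff_dvd)
  then obtain p1 where p1: "p = [:-x, 1:] * p1" by (auto elim: dvdE)
  have "poly p1 z = 0" if "z \<in> F" for z
    using insert(4)[of z] that insert(2) p1 by auto
  then have "(\<Prod>z\<in>F. [:-z, 1:]) dvd p1" using insert(3) by blast
  have pe: "(\<Prod>z\<in>insert x F. [:-z, 1::real:]) = [:-x, 1:] * (\<Prod>z\<in>F. [:-z, 1::real:])"
    by (simp only: prod.insert[OF insert(1,2)])
  show ?case unfolding pe p1 by (rule mult_dvd_mono) (auto simp: \<open>(\<Prod>z\<in>F. [:-z, 1:]) dvd p1\<close>)
qed

lemma full_roots:
  fixes P :: "real poly"
  assumes "P \<noteq> 0" "finite Z" "\<And>z. z \<in> Z \<Longrightarrow> poly P z = 0" "degree P \<le> card Z"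
  shows "P = smult (lead_coeff P) (\<Prod>z\<in>Z. [:-z, 1:])" "{t. poly P t = 0} = Z" "card Z = degree P"
proof -
  obtain g where g: "P = (\<Prod>z\<in>Z. [:-z, 1:]) * g" using prod_lin_dvd[OF assms(2,3)] by (auto elim: dvdE)
  have g0: "g \<noteq> 0" using g assms(1) by auto
  have "degree P = card Z + degree g" using g g0 prod_lin_ne0[of Z]
    by (simp add: degree_mult_eq degree_prod_lin[OF assms(2)])
  then have dg: "degree g = 0" "card Z = degree P" using assms(4) by auto
  then obtain c where c: "g = [:c:]" by (metis degree_eq_zeroE)
  have "lead_coeff P = c" using g c lead_prod_lin[of Z] by (simp add: lead_coeff_mult)
  then show P: "P = smult (lead_coeff P) (\<Prod>z\<in>Z. [:-z, 1:])" using g c by (simp add: lead_prod_lin)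
  show "card Z = degree P" using dg by simp
  have "c \<noteq> 0" using c g0 by simp
  then show "{t. poly P t = 0} = Z" using g c assms(2) by (auto simp: poly_prod)
qed

context wt begin

lemma sign_change:
  assumes P0: "P \<noteq> 0" and orth: "\<And>q. degree q < r \<Longrightarrow> Iw v (P * q) = 0"
  shows "r \<le> card {z. z \<in> {-1<..<1} \<and> poly P z = 0 \<and> odd (order z P)}"
proof (rule ccontr)
  define Z where "Z = {z. z \<in> {-1<..<1} \<and> poly P z = 0 \<and> odd (order z P)}"
  assume "\<not> r \<le> card {z. z \<in> {-1<..<1} \<and> poly P z = 0 \<and> odd (order z P)}"
  then have lt: "card Z < r" unfolding Z_def by simp
  have finZ: "finite Z" unfolding Z_def
    by (rule finite_subset[OF _ poly_roots_finite[OF P0]]) auto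
  define q where "q = (\<Prod>z\<in>Z. [:-z, 1::real:])"
  have q0: "q \<noteq> 0" unfolding q_def by (rule prod_lin_ne0)
  have "degree q < r" unfolding q_def using degree_prod_lin[OF finZ] lt by simp
  then have I0: "Iw v (P * q) = 0" by (rule orth)
  have f0: "P * q \<noteq> 0" using P0 q0 by simp
  have "even (order y (P * q))" if "y \<in> {-1<..<1}" "poly (P * q) y = 0" for y
  proof -
    have "order y (P * q) = order y P + (if y \<in> Z then 1 else 0)"
      using f0 by (simp add: order_mult q_def order_prod_lin[OF finZ])
    moreover have "y \<notin> Z \<Longrightarrow> even (order y P)"
      using that(1) unfolding Z_def by (cases "poly P y = 0") (auto simp: order_0I)
    moreover have "y \<in> Z \<Longrightarrow> odd (order y P)" unfolding Z_def by simp
    ultimately show ?thesis by auto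
  qed
  then have cs: "(\<forall>t\<in>{-1<..<1}. 0 \<le> poly (P * q) t) \<or> (\<forall>t\<in>{-1<..<1}. poly (P * q) t \<le> 0)"
    using const_sign[OF f0] by blast
  then show False
  proof
    assume "\<forall>t\<in>{-1<..<1}. 0 \<le> poly (P * q) t"
    then have "0 < Iw v (P * q)" using I_pos[OF _ f0] by blast
    then show False using I0 by simp
  next
    assume "\<forall>t\<in>{-1<..<1}. poly (P * q) t \<le> 0"
    then have "0 < Iw v (- (P * q))" using I_pos[of "- (P * q)"] f0 by auto
    then show False using I0 I_minus by simp
  qed
qed

lemma roots_inside:
  assumes P0: "P \<noteq> 0" and orth: "\<And>q. degree q < degree P \<Longrightarrow> Iw v (P * q) = 0"
  defines "Z \<equiv> {z. z \<in> {-1<..<1} \<and> poly P z = 0 \<and> odd (order z P)}"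
  shows "P = smult (lead_coeff P) (\<Prod>z\<in>Z. [:-z, 1:])" "{t. poly P t = 0} = Z" "card Z = degree P"
    "Z \<subseteq> {-1<..<1}"
proof -
  have finZ: "finite Z" unfolding Z_def
    by (rule finite_subset[OF _ poly_roots_finite[OF P0]]) auto
  have "degree P \<le> card Z" unfolding Z_def by (rule sign_change[OF P0 orth])
  then show "P = smult (lead_coeff P) (\<Prod>z\<in>Z. [:-z, 1:])" "{t. poly P t = 0} = Z" "card Z = degree P"
    using full_roots[OF P0 finZ] Z_def by auto
  show "Z \<subseteq> {-1<..<1}" unfolding Z_def by auto
qed

end

lemma prod_minus_one:
  "(\<Prod>z\<in>Z. (-1 - z::real)) = (-1)^card Z * (\<Prod>z\<in>Z. 1 + z)"
proof -
  have "(\<Prod>z\<in>Z. (-1 - z::real)) = (\<Prod>z\<in>Z. (-1) * (1 + z))" by (rule prod.cong) auto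
  also have "\<dots> = (-1)^card Z * (\<Prod>z\<in>Z. 1 + z)" by (simp only: prod.distrib prod_constant)
  finally show ?thesis .
qed

lemma split_signs:
  assumes "P = smult c (\<Prod>z\<in>Z. [:-z, 1::real:])" "Z \<subseteq> {-1<..<1}" "c > 0"
  shows "poly P 1 > 0" "(-1)^card Z * poly P (-1) > 0"
proof -
  have "poly P 1 = c * (\<Prod>z\<in>Z. 1 - z)" using assms by (simp add: poly_prod_lin)
  moreover have "(\<Prod>z\<in>Z. 1 - z) > 0" by (rule prod_pos) (use assms in auto)
  ultimately show "poly P 1 > 0" using assms by simp
  have "(-1)^card Z * poly P (-1) = c * ((-1)^card Z * (-1)^card Z * (\<Prod>z\<in>Z. 1 + z))"
    using assms by (simp add: poly_prod_lin prod_minus_one)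
  also have "(-1::real)^card Z * (-1)^card Z = 1" by (simp flip: power_add)
  finally have e: "(-1)^card Z * poly P (-1) = c * (\<Prod>z\<in>Z. 1 + z)" by simp
  have "(\<Prod>z\<in>Z. 1 + z) > 0" by (rule prod_pos) (use assms in auto)
  then show "(-1)^card Z * poly P (-1) > 0" unfolding e using assms by simp
qed

definition W2 :: "(real \<Rightarrow> real) \<Rightarrow> real \<Rightarrow> real" where
  "W2 w = (\<lambda>t. (1 - t^2) * w t)"

locale qs =
  fixes w :: "real \<Rightarrow> real" and m M :: real and n :: nat
  assumes wf: "weight_function w" and mpos: "0 < m"
    and ae: "AE t in lborel. t \<in> {-1..1} \<longrightarrow> m \<le> w t \<and> w t \<le> M"
    and n1: "1 \<le> n"
begin

lemma wint_w: "set_integrable lborel {-1..1} w" and wnn: "\<And>t. t \<in> {-1..1} \<Longrightarrow> 0 \<le> w t"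
  using wf unfolding weight_function_def by auto

lemma wt_polyw:
  assumes "\<And>t. t \<in> {-1..1} \<Longrightarrow> 0 \<le> poly g t" "\<And>t. t \<in> {-1<..<1} \<Longrightarrow> 0 < poly g t"
  shows "wt (\<lambda>t. poly g t * w t)"
proof
  show "set_integrable lborel {-1..1} (\<lambda>t. poly g t * w t)" by (rule set_integrable_poly_mult[OF wint_w])
  show "0 \<le> poly g t * w t" if "t \<in> {-1..1}" for t using assms(1)[OF that] wnn[OF that] by simp
  show "AE t in lborel. t \<in> {-1..1} \<longrightarrow> 0 < poly g t * w t"
    using ae AE_lborel_singleton[of "-1::real"] AE_lborel_singleton[of "1::real"]
  proof eventually_elim
    case (elim t)
    show ?case
    proof
      assume t: "t \<in> {-1..1}"
      then have "t \<in> {-1<..<1}" using elim by auto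
      then show "0 < poly g t * w t" using assms(2) elim t mpos by (auto intro!: mult_pos_pos)
    qed
  qed
qed

lemma wt_w: "wt w"
  using wt_polyw[of 1] by simp

lemma W2_eq: "W2 w = (\<lambda>t. poly [:1, 0, -1:] t * w t)"
  unfolding W2_def by (auto simp: power2_eq_square algebra_simps)

lemma wt_W2: "wt (W2 w)"
  unfolding W2_eq
proof (rule wt_polyw)
  fix t :: real assume "t \<in> {-1..1}"
  then have "0 \<le> (1 - t) * (1 + t)" by (intro mult_nonneg_nonneg) auto
  then show "0 \<le> poly [:1, 0, -1:] t" by (simp add: algebra_simps)
next
  fix t :: real assume "t \<in> {-1<..<1}"
  then have "0 < (1 - t) * (1 + t)" by (intro mult_pos_pos) auto
  then show "0 < poly [:1, 0, -1:] t" by (simp add: algebra_simps)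
qed

lemma wt_Wp: "wt (\<lambda>t. poly [:1, 1:] t * w t)"
  by (rule wt_polyw) auto

lemma wt_Wm: "wt (\<lambda>t. poly [:1, -1:] t * w t)"
  by (rule wt_polyw) auto

lemma I_transfer: "Iw (\<lambda>t. poly g t * w t) p = Iw w (g * p)"
  unfolding Iw_def by (simp add: algebra_simps)

lemma I_W2: "Iw (W2 w) p = Iw w ([:1, 0, -1:] * p)"
  unfolding W2_eq I_transfer ..

abbreviation "\<phi> \<equiv> phi_poly w n"
abbreviation "\<psi> \<equiv> psi_poly w n"

lemma orth_phi: "orth w n \<phi>"
  unfolding phi_poly_def by (rule wt.orthonormal_poly_orth[OF wt_w])

lemma orth_psi: "orth (W2 w) (n - 1) \<psi>"
  unfolding psi_poly_def W2_def[symmetric] by (rule wt.orthonormal_poly_orth[OF wt_W2])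

lemma phi_deg: "degree \<phi> = n" and phi_lead: "lead_coeff \<phi> > 0" and phi0: "\<phi> \<noteq> 0"
  using orth_phi unfolding orth_def by auto

lemma psi_deg: "degree \<psi> = n - 1" and psi_lead: "lead_coeff \<psi> > 0" and psi0: "\<psi> \<noteq> 0"
  using orth_psi unfolding orth_def by auto

lemma phi_ip: "degree q \<le> n \<Longrightarrow> Iw w (\<phi> * q) = coeff q n / lead_coeff \<phi>"
  by (rule wt.orth_ip[OF wt_w orth_phi])

lemma psi_ip: "degree q \<le> n - 1 \<Longrightarrow> Iw w ([:1, 0, -1:] * (\<psi> * q)) = coeff q (n - 1) / lead_coeff \<psi>"
  using wt.orth_ip[OF wt_W2 orth_psi] I_W2 by simp

lemma phi_orth: "degree q < n \<Longrightarrow> Iw w (\<phi> * q) = 0"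
  using orth_phi unfolding orth_def by auto

lemma psi_orth: "degree q < n - 1 \<Longrightarrow> Iw w ([:1, 0, -1:] * (\<psi> * q)) = 0"
  using orth_psi I_W2 unfolding orth_def by auto

definition "Zphi = {z. z \<in> {-1<..<1} \<and> poly \<phi> z = 0 \<and> odd (order z \<phi>)}"
definition "Zpsi = {z. z \<in> {-1<..<1} \<and> poly \<psi> z = 0 \<and> odd (order z \<psi>)}"

lemma phi_roots: "\<phi> = smult (lead_coeff \<phi>) (\<Prod>z\<in>Zphi. [:-z, 1:])" "{t. poly \<phi> t = 0} = Zphi"
  "card Zphi = n" "Zphi \<subseteq> {-1<..<1}"
  using wt.roots_inside[OF wt_w phi0] phi_orth phi_deg unfolding Zphi_def by auto

lemma psi_roots: "\<psi> = smult (lead_coeff \<psi>) (\<Prod>z\<in>Zpsi. [:-z, 1:])" "{t. poly \<psi> t = 0} = Zpsi"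
  "card Zpsi = n - 1" "Zpsi \<subseteq> {-1<..<1}"
proof -
  have "\<And>q. degree q < degree \<psi> \<Longrightarrow> Iw (W2 w) (\<psi> * q) = 0"
    using orth_psi psi_deg unfolding orth_def by auto
  then show "\<psi> = smult (lead_coeff \<psi>) (\<Prod>z\<in>Zpsi. [:-z, 1:])" "{t. poly \<psi> t = 0} = Zpsi"
    "card Zpsi = n - 1" "Zpsi \<subseteq> {-1<..<1}"
    using wt.roots_inside[OF wt_W2 psi0] psi_deg unfolding Zpsi_def by auto
qed

lemma phi_signs: "poly \<phi> 1 > 0" "(-1)^n * poly \<phi> (-1) > 0"
  using split_signs[OF phi_roots(1) phi_roots(4) phi_lead] phi_roots(3) by auto

lemma psi_signs: "poly \<psi> 1 > 0" "(-1)^(n-1) * poly \<psi> (-1) > 0"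
  using split_signs[OF psi_roots(1) psi_roots(4) psi_lead] psi_roots(3) by auto

lemma no_common_root: "\<not> (poly \<phi> x = 0 \<and> poly \<psi> x = 0)"
proof
  assume h: "poly \<phi> x = 0 \<and> poly \<psi> x = 0"
  have n2: "n \<ge> 2"
  proof (rule ccontr)
    assume "\<not> n \<ge> 2"
    then have "degree \<psi> = 0" using psi_deg n1 by simp
    then obtain c where "\<psi> = [:c:]" by (metis degree_eq_zeroE)
    then show False using h psi0 by simp
  qed
  obtain q where q: "\<phi> = [:-x, 1:] * q" using h by (metis dvdE poly_eq_0_iff_dvd)
  obtain r where r: "\<psi> = [:-x, 1:] * r" using h by (metis dvdE poly_eq_0_iff_dvd)
  have q0: "q \<noteq> 0" and r0: "r \<noteq> 0" using q r phi0 psi0 by auto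
  have "degree \<phi> = degree [:-x, 1:] + degree q" by (subst q, rule degree_mult_eq) (use q0 in auto)
  then have dq: "degree q = n - 1" using phi_deg by simp
  have "degree \<psi> = degree [:-x, 1:] + degree r" by (subst r, rule degree_mult_eq) (use r0 in auto)
  then have dr: "degree r = n - 2" using psi_deg by simp
  have "lead_coeff \<phi> = lead_coeff [:-x, 1:] * lead_coeff q" unfolding q by (rule lead_coeff_mult)
  then have lq: "lead_coeff q = lead_coeff \<phi>" by simp
  have "lead_coeff \<psi> = lead_coeff [:-x, 1:] * lead_coeff r" unfolding r by (rule lead_coeff_mult)
  then have lr: "lead_coeff r = lead_coeff \<psi>" by simp
  have "degree ([:1, 0, -1:] * r) = degree [:1, 0, -1::real:] + degree r" by (rule degree_mult_eq) (use r0 in auto)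
  then have dqr: "degree ([:1, 0, -1:] * r) = n" using dr n2 by simp
  have cqr: "coeff ([:1, 0, -1:] * r) n = - lead_coeff \<psi>"
  proof -
    have "lead_coeff ([:1, 0, -1:] * r) = lead_coeff [:1, 0, -1::real:] * lead_coeff r" by (rule lead_coeff_mult)
    then show ?thesis using dqr lr by simp
  qed
  have A1: "Iw w (\<phi> * ([:1, 0, -1:] * r)) = - lead_coeff \<psi> / lead_coeff \<phi>"
    using phi_ip[of "[:1, 0, -1:] * r"] dqr cqr by simp
  have "\<phi> * ([:1, 0, -1:] * r) = [:1, 0, -1:] * (\<psi> * q)"
    by (subst q, subst r) (simp add: algebra_simps)
  then have A2: "Iw w (\<phi> * ([:1, 0, -1:] * r)) = lead_coeff \<phi> / lead_coeff \<psi>"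
    using psi_ip[of q] dq lq by simp
  have "- lead_coeff \<psi> / lead_coeff \<phi> < 0" using phi_lead psi_lead by (simp add: divide_neg_pos)
  moreover have "lead_coeff \<phi> / lead_coeff \<psi> > 0" using phi_lead psi_lead by simp
  ultimately show False using A1 A2 by simp
qed

end

definition lagr :: "real set \<Rightarrow> real \<Rightarrow> real poly" where
  "lagr S u = smult (1 / (\<Prod>v\<in>S-{u}. u - v)) (\<Prod>v\<in>S-{u}. [:-v, 1:])"

lemma lagr_eval:
  assumes "finite S" "u \<in> S" "y \<in> S"
  shows "poly (lagr S u) y = (if y = u then 1 else 0)"
proof (cases "y = u")
  case True
  have "(\<Prod>v\<in>S-{u}. u - v) \<noteq> 0" using assms(1) by (auto simp: prod_zero_iff)
  then show ?thesis using True by (simp add: lagr_def poly_prod_lin)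
next
  case False
  then have "y \<in> S - {u}" using assms by auto
  then have "(\<Prod>v\<in>S-{u}. y - v) = 0" using assms(1) by (auto simp: prod_zero_iff)
  then show ?thesis using False by (simp add: lagr_def poly_prod_lin)
qed

lemma lagr_deg:
  assumes "finite S" "u \<in> S"
  shows "degree (lagr S u) = card S - 1"
proof -
  have "(\<Prod>v\<in>S-{u}. u - v) \<noteq> 0" using assms(1) by (auto simp: prod_zero_iff)
  then show ?thesis using assms by (simp add: lagr_def degree_prod_lin)
qed

lemma sum_lagr_eval:
  assumes "finite S" "y \<in> S"
  shows "(\<Sum>u\<in>S. c u * poly (lagr S u) y) = c y"
proof -
  have "(\<Sum>u\<in>S. c u * poly (lagr S u) y) = (\<Sum>u\<in>S. if u = y then c u else 0)"
    by (rule sum.cong) (use assms lagr_eval in auto)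
  also have "\<dots> = c y" using assms by simp
  finally show ?thesis .
qed

lemma interp:
  assumes "finite S" "degree r < card S"
  shows "r = (\<Sum>u\<in>S. smult (poly r u) (lagr S u))"
proof (rule ccontr)
  define d where "d = r - (\<Sum>u\<in>S. smult (poly r u) (lagr S u))"
  assume "r \<noteq> (\<Sum>u\<in>S. smult (poly r u) (lagr S u))"
  then have d0: "d \<noteq> 0" unfolding d_def by simp
  have "degree (\<Sum>u\<in>S. smult (poly r u) (lagr S u)) \<le> card S - 1"
    by (rule degree_sum_le) (use assms lagr_deg in \<open>auto intro: order.trans[OF degree_smult_le]\<close>)
  then have dd: "degree d \<le> card S - 1" unfolding d_def using assms(2)
    by (intro degree_diff_le) auto
  have "poly d y = 0" if "y \<in> S" for y
  proof -
    have "poly (\<Sum>u\<in>S. smult (poly r u) (lagr S u)) y = (\<Sum>u\<in>S. poly r u * poly (lagr S u) y)"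
      by (simp add: poly_sum)
    also have "\<dots> = poly r y" by (rule sum_lagr_eval[OF assms(1) that])
    finally show ?thesis unfolding d_def by simp
  qed
  then have "S \<subseteq> {t. poly d t = 0}" by auto
  then have "card S \<le> card {t. poly d t = 0}"
    by (rule card_mono[OF poly_roots_finite[OF d0]])
  also have "\<dots> \<le> degree d" by (rule card_poly_roots_bound[OF d0])
  finally show False using dd assms(2) by linarith
qed

context qs begin

definition "qprops S l \<longleftrightarrow> (\<forall>u. u \<notin> S \<longrightarrow> l u = 0) \<and>
      (\<forall>p. degree p \<le> 2 * n - 1 \<longrightarrow> (\<Sum>u\<in>S. l u * poly p u) = Iw w p)"

lemma quad_unique:
  assumes "finite S" "card S \<le> 2 * n" "qprops S l1" "qprops S l2"
  shows "l1 = l2"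
proof
  fix u
  show "l1 u = l2 u"
  proof (cases "u \<in> S")
    case True
    have "degree (lagr S u) \<le> 2 * n - 1" using lagr_deg[OF assms(1) True] assms(2) by simp
    then have "(\<Sum>y\<in>S. l1 y * poly (lagr S u) y) = (\<Sum>y\<in>S. l2 y * poly (lagr S u) y)"
      using assms(3,4) unfolding qprops_def by auto
    moreover have "(\<Sum>y\<in>S. l y * poly (lagr S u) y) = l u" for l
    proof -
      have "(\<Sum>y\<in>S. l y * poly (lagr S u) y) = (\<Sum>y\<in>S. if y = u then l y else 0)"
        by (rule sum.cong) (use assms(1) True lagr_eval in auto)
      also have "\<dots> = l u" using assms(1) True by simp
      finally show ?thesis .
    qed
    ultimately show ?thesis by simp
  next
    case False
    then show ?thesis using assms(3,4) unfolding qprops_def by auto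
  qed
qed

lemma quad_exists:
  assumes S: "finite S" "card S \<le> 2 * n"
    and orth: "\<And>h. degree h < 2 * n - card S \<Longrightarrow> Iw w ((\<Prod>u\<in>S. [:-u, 1:]) * h) = 0"
  shows "qprops S (\<lambda>u. if u \<in> S then Iw w (lagr S u) else 0)"
  unfolding qprops_def
proof (intro conjI allI impI)
  fix u :: real assume "u \<notin> S" then show "(if u \<in> S then Iw w (lagr S u) else 0) = 0" by simp
next
  fix p :: "real poly" assume dp: "degree p \<le> 2 * n - 1"
  define \<omega> where "\<omega> = (\<Prod>u\<in>S. [:-u, 1::real:])"
  have \<omega>0: "\<omega> \<noteq> 0" unfolding \<omega>_def by (rule prod_lin_ne0)
  have d\<omega>: "degree \<omega> = card S" unfolding \<omega>_def by (rule degree_prod_lin[OF S(1)])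
  define h where "h = p div \<omega>"
  define r where "r = p mod \<omega>"
  have pe: "p = \<omega> * h + r" unfolding h_def r_def by (simp add: mult.commute)
  have rdeg: "r = 0 \<or> degree r < card S" using degree_mod_less[OF \<omega>0, of p] d\<omega> r_def by simp
  have Ih: "Iw w (\<omega> * h) = 0"
  proof (cases "h = 0")
    case False
    have dwh: "degree (\<omega> * h) = card S + degree h" using \<omega>0 False d\<omega> by (simp add: degree_mult_eq)
    have "degree p = card S + degree h"
    proof (cases "r = 0")
      case True then show ?thesis using pe dwh by simp
    next
      case False
      then have "degree r < degree (\<omega> * h)" using rdeg dwh by simp
      then show ?thesis using pe dwh by (simp add: degree_add_eq_left)
    qed
    then have "degree h < 2 * n - card S" using dp n1 by linarith
    then show ?thesis unfolding \<omega>_def by (rule orth)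
  qed (simp add: wt.I_0[OF wt_w])
  have pr: "poly p u = poly r u" if "u \<in> S" for u
  proof -
    have "poly \<omega> u = 0" unfolding \<omega>_def poly_prod_lin using S(1) that by (auto simp: prod_zero_iff)
    then show ?thesis using pe by simp
  qed
  have "Iw w p = Iw w r" using Ih pe by (simp add: wt.I_add[OF wt_w])
  also have "\<dots> = (\<Sum>u\<in>S. poly r u * Iw w (lagr S u))"
  proof (cases "r = 0")
    case True then show ?thesis by (simp add: wt.I_0[OF wt_w])
  next
    case False
    then have "r = (\<Sum>u\<in>S. smult (poly r u) (lagr S u))" using interp[OF S(1)] rdeg by blast
    then have "Iw w r = Iw w (\<Sum>u\<in>S. smult (poly r u) (lagr S u))" by simp
    also have "\<dots> = (\<Sum>u\<in>S. poly r u * Iw w (lagr S u))"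
      by (simp add: wt.I_sum[OF wt_w] wt.I_smult[OF wt_w])
    finally show ?thesis .
  qed
  also have "\<dots> = (\<Sum>u\<in>S. (if u \<in> S then Iw w (lagr S u) else 0) * poly p u)"
    by (rule sum.cong) (auto simp: pr)
  finally show "(\<Sum>u\<in>S. (if u \<in> S then Iw w (lagr S u) else 0) * poly p u) = Iw w p" by simp
qed

lemma quad_weights_eq:
  assumes "finite S" "card S \<le> 2 * n" "qprops S l"
  shows "quad_weights w n S = l"
proof -
  have "(THE l. qprops S l) = l"
    by (rule the_equality) (use assms quad_unique in blast)+
  then show ?thesis unfolding quad_weights_def qprops_def Iw_def .
qed

lemma radau_roots:
  assumes V: "wt V" and P0: "P \<noteq> 0" and dP: "degree P = n"
    and orth: "\<And>q. degree q < n - 1 \<Longrightarrow> Iw V (P * q) = 0"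
    and s1: "poly P 1 > 0" and s2: "(-1)^n * poly P (-1) > 0"
  shows "{t. poly P t = 0} \<subseteq> {-1<..<1}" "card {t. poly P t = 0} = n"
    "P = smult (lead_coeff P) (\<Prod>z\<in>{t. poly P t = 0}. [:-z, 1:])"
proof -
  define Z where "Z = {z. z \<in> {-1<..<1} \<and> poly P z = 0 \<and> odd (order z P)}"
  have finZ: "finite Z" unfolding Z_def
    by (rule finite_subset[OF _ poly_roots_finite[OF P0]]) auto
  have cZ: "n - 1 \<le> card Z" unfolding Z_def by (rule wt.sign_change[OF V P0 orth])
  have Zr: "\<And>z. z \<in> Z \<Longrightarrow> poly P z = 0" unfolding Z_def by auto
  have "n \<le> card Z"
  proof (rule ccontr)
    assume "\<not> n \<le> card Z"
    then have cz: "card Z = n - 1" using cZ by simp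
    obtain g where g: "P = (\<Prod>z\<in>Z. [:-z, 1:]) * g" using prod_lin_dvd[OF finZ Zr] by (auto elim: dvdE)
    have ne: "(\<Prod>z\<in>Z. [:-z, 1::real:]) * g \<noteq> 0" using g P0 by metis
    then have g0: "g \<noteq> 0" by auto
    have "degree P = degree (\<Prod>z\<in>Z. [:-z, 1::real:]) + degree g" unfolding g
      by (rule degree_mult_eq) (use prod_lin_ne0 g0 in auto)
    then have "degree P = card Z + degree g" by (simp only: degree_prod_lin[OF finZ])
    then have dg: "degree g = 1" using cz dP n1 by simp
    have pP: "poly P t = (\<Prod>z\<in>Z. t - z) * poly g t" for t unfolding g poly_mult poly_prod_lin ..
    have Zin: "Z \<subseteq> {-1<..<1}" unfolding Z_def by auto
    have p1: "(\<Prod>z\<in>Z. 1 - z) > 0" by (rule prod_pos) (use Zin in auto)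
    have p2: "(\<Prod>z\<in>Z. 1 + z) > 0" by (rule prod_pos) (use Zin in auto)
    have g1: "poly g 1 > 0" using s1 pP[of 1] p1 by (simp add: zero_less_mult_iff)
    have "(-1)^n * poly P (-1) = (-1)^n * (-1)^(n-1) * (\<Prod>z\<in>Z. 1 + z) * poly g (-1)"
      using pP[of "-1"] cz by (simp add: prod_minus_one)
    also have "(-1::real)^n * (-1)^(n-1) = -1"
    proof -
      obtain k where k: "n = Suc k" using n1 by (cases n) auto
      have "(-1::real)^k * (-1)^k = ((-1) * (-1))^k" by (simp only: power_mult_distrib)
      then have "(-1::real)^k * (-1)^k = 1" by simp
      then show ?thesis unfolding k by simp
    qed
    finally have "0 < - ((\<Prod>z\<in>Z. 1 + z) * poly g (-1))" using s2 by simp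
    then have "(\<Prod>z\<in>Z. 1 + z) * poly g (-1) < 0" by simp
    then have gm1: "poly g (-1) < 0" using p2 by (simp add: mult_less_0_iff)
    obtain \<beta> where b: "-1 < \<beta>" "\<beta> < 1" "poly g \<beta> = 0"
      using poly_IVT_pos[of "-1" 1 g] g1 gm1 by auto
    have og: "order \<beta> g = 1"
      using order_degree[OF g0, of \<beta>] dg order_root[of g \<beta>] b g0 by linarith
    have "order \<beta> P = order \<beta> (\<Prod>z\<in>Z. [:-z, 1::real:]) + order \<beta> g" unfolding g
      by (rule order_mult[OF ne])
    then have oP: "order \<beta> P = (if \<beta> \<in> Z then 1 else 0) + 1"
      using og by (simp only: order_prod_lin[OF finZ])
    have "poly P \<beta> = 0" using pP b by simp
    show False
    proof (cases "\<beta> \<in> Z")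
      case True
      then have "odd (order \<beta> P)" unfolding Z_def by blast
      then show False using oP True by simp
    next
      case False
      then have "order \<beta> P = 1" using oP by simp
      then have "\<beta> \<in> Z" unfolding Z_def using b \<open>poly P \<beta> = 0\<close> by simp
      then show False using False by simp
    qed
  qed
  then have "degree P \<le> card Z" using dP by simp
  note fr = full_roots[OF P0 finZ Zr this]
  have "Z \<subseteq> {-1<..<1}" unfolding Z_def by auto
  then show "{t. poly P t = 0} \<subseteq> {-1<..<1}" using fr(2) by simp
  show "card {t. poly P t = 0} = n" using fr(2) fr(3) dP by simp
  show "P = smult (lead_coeff P) (\<Prod>z\<in>{t. poly P t = 0}. [:-z, 1:])" using fr(1) fr(2) by (simp only:)
qed

end

context qs begin

lemma endpoint_bound:
  assumes S: "finite S" "S \<subseteq> {-1..1}" "e \<in> S" "e = -1 \<or> e = 1" "card S \<le> n + 1"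
    and l: "qprops S l" and q: "degree q \<le> n - 1"
  shows "l e * (poly q e)^2 \<le> Iw w (q * q)"
proof -
  have ex: "(\<Sum>u\<in>S. l u * poly p u) = Iw w p" if "degree p \<le> 2 * n - 1" for p
    using l that unfolding qprops_def by auto
  have lpos: "0 \<le> l u" if u: "u \<in> S - {e}" for u
  proof -
    define G where "G = (\<Prod>v\<in>S-{u,e}. [:-v, 1::real:])"
    define p where "p = [:1, -e:] * G * G"
    have cS: "card (S - {u, e}) = card S - 2" using S u by (simp add: card_Diff_subset)
    have "2 \<le> card S"
    proof -
      have "{u, e} \<subseteq> S" using S u by auto
      then have "card {u, e} \<le> card S" by (rule card_mono[OF S(1)])
      then show ?thesis using u by simp
    qed
    have dG: "degree G = card S - 2" unfolding G_def using S cS by (simp add: degree_prod_lin)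
    have "degree p \<le> degree [:1, -e:] + degree G + degree G" unfolding p_def
      by (meson add_le_mono degree_mult_le le_refl order_trans)
    also have "\<dots> \<le> 1 + (card S - 2) + (card S - 2)" using dG by simp
    also have "\<dots> \<le> 2 * n - 1" using S(5) \<open>2 \<le> card S\<close> n1 by linarith
    finally have dp: "degree p \<le> 2 * n - 1" .
    have pG: "poly G t = (\<Prod>v\<in>S-{u,e}. t - v)" for t unfolding G_def by (simp add: poly_prod_lin)
    have pp: "poly p t = (1 - e * t) * (poly G t)^2" for t unfolding p_def by (simp add: power2_eq_square algebra_simps)
    have zero: "poly p y = 0" if "y \<in> S" "y \<noteq> u" for y
    proof (cases "y = e")
      case True then show ?thesis using S(4) pp by auto
    next
      case False
      then have "y \<in> S - {u, e}" using that by auto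
      then have "poly G y = 0" unfolding pG using S(1) by (auto simp: prod_zero_iff)
      then show ?thesis using pp by simp
    qed
    have "(\<Sum>y\<in>S. l y * poly p y) = (\<Sum>y\<in>S. if y = u then l u * poly p u else 0)"
      by (rule sum.cong) (auto simp: zero)
    also have "\<dots> = l u * poly p u" using u S(1) by simp
    finally have e1: "l u * poly p u = Iw w p" using ex[OF dp] by simp
    have "Iw w p \<ge> 0"
    proof (rule wt.I_nonneg[OF wt_w])
      fix t :: real assume "t \<in> {-1<..<1}"
      then have "0 \<le> 1 - e * t" using S(4) by auto
      then show "0 \<le> poly p t" unfolding pp by simp
    qed
    moreover have "poly p u > 0"
    proof -
      have uu: "u \<in> {-1..1}" "u \<noteq> e" using u S(2) by auto
      then have "0 < 1 - e * u" using S(4) by auto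
      moreover have "poly G u \<noteq> 0" unfolding pG using S(1) by (auto simp: prod_zero_iff)
      ultimately show ?thesis unfolding pp by simp
    qed
    ultimately have "0 \<le> l u * poly p u" "0 < poly p u" using e1 by auto
    then show ?thesis using zero_le_mult_iff by (metis not_less)
  qed
  have "degree (q * q) \<le> 2 * n - 1"
    using degree_mult_le[of q q] q n1 by linarith
  then have "Iw w (q * q) = (\<Sum>u\<in>S. l u * (poly q u)^2)"
    using ex[of "q * q"] by (simp add: power2_eq_square)
  also have "\<dots> = l e * (poly q e)^2 + (\<Sum>u\<in>S-{e}. l u * (poly q u)^2)"
    using S by (simp add: sum.remove)
  also have "\<dots> \<ge> l e * (poly q e)^2"
  proof -
    have "0 \<le> (\<Sum>u\<in>S-{e}. l u * (poly q u)^2)"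
      by (rule sum_nonneg) (use lpos in auto)
    then show ?thesis by simp
  qed
  finally show ?thesis .
qed

end

context qs begin

definition good :: "real set \<Rightarrow> bool" where
  "good S \<longleftrightarrow> finite S \<and> S \<subseteq> {-1..1} \<and> card S \<le> n + 1 \<and> qprops S (quad_weights w n S)"

lemma good_intro:
  assumes "finite S" "S \<subseteq> {-1..1}" "card S \<le> n + 1"
    "\<And>h. degree h < 2 * n - card S \<Longrightarrow> Iw w ((\<Prod>u\<in>S. [:-u, 1:]) * h) = 0"
  shows "good S"
proof -
  have c: "card S \<le> 2 * n" using assms(3) n1 by linarith
  have "qprops S (\<lambda>u. if u \<in> S then Iw w (lagr S u) else 0)"
    by (rule quad_exists[OF assms(1) c assms(4)])
  then have "quad_weights w n S = (\<lambda>u. if u \<in> S then Iw w (lagr S u) else 0)"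
    by (rule quad_weights_eq[OF assms(1) c])
  then show ?thesis unfolding good_def using assms
      \<open>qprops S (\<lambda>u. if u \<in> S then Iw w (lagr S u) else 0)\<close> by simp
qed

lemma good_scaled:
  assumes "finite S" "S \<subseteq> {-1..1}" "card S \<le> n + 1"
    "(\<Prod>u\<in>S. [:-u, 1:]) = smult c G"
    "\<And>h. degree h < 2 * n - card S \<Longrightarrow> Iw w (G * h) = 0"
  shows "good S"
proof (rule good_intro[OF assms(1-3)])
  fix h :: "real poly" assume "degree h < 2 * n - card S"
  then show "Iw w ((\<Prod>u\<in>S. [:-u, 1:]) * h) = 0"
    using assms(5) by (simp add: assms(4) wt.I_smult[OF wt_w])
qed

lemma good_gauss: "good (zero_set \<phi>)"
proof -
  have Z: "zero_set \<phi> = Zphi" using phi_roots(2) unfolding zero_set_def by simp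
  define c where "c = lead_coeff \<phi>"
  have c0: "c \<noteq> 0" unfolding c_def using phi_lead by linarith
  have "\<phi> = smult c (\<Prod>z\<in>Zphi. [:-z, 1:])" unfolding c_def by (rule phi_roots(1))
  then have "smult (1 / c) \<phi> = smult (1 / c) (smult c (\<Prod>z\<in>Zphi. [:-z, 1:]))" by (rule arg_cong)
  then have e: "(\<Prod>z\<in>Zphi. [:-z, 1:]) = smult (1 / c) \<phi>" using c0 by simp
  have fin: "finite Zphi" using phi_roots(3) n1 card.infinite by fastforce
  show ?thesis unfolding Z
  proof (rule good_scaled[OF fin _ _ e])
    show "Zphi \<subseteq> {-1..1}" using phi_roots(4) by auto
    show "card Zphi \<le> n + 1" using phi_roots(3) by simp
    fix h :: "real poly" assume "degree h < 2 * n - card Zphi"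
    then show "Iw w (\<phi> * h) = 0" using phi_orth phi_roots(3) by simp
  qed
qed


lemma good_lobatto: "good (zero_set ([:1, 0, -1:] * \<psi>))"
proof -
  have fin: "finite Zpsi"
    using psi_roots(4) finite_subset poly_roots_finite[OF psi0] psi_roots(2) by auto
  have Z: "zero_set ([:1, 0, -1:] * \<psi>) = insert (-1) (insert 1 Zpsi)"
  proof -
    have "poly ([:1, 0, -1:] * \<psi>) t = 0 \<longleftrightarrow> t = -1 \<or> t = 1 \<or> t \<in> Zpsi" for t
    proof -
      have "poly ([:1, 0, -1:] * \<psi>) t = (1 - t) * (1 + t) * poly \<psi> t" by (simp add: algebra_simps)
      moreover have "poly \<psi> t = 0 \<longleftrightarrow> t \<in> Zpsi" using psi_roots(2) by auto
      ultimately show ?thesis by auto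
    qed
    then show ?thesis unfolding zero_set_def by auto
  qed
  have nm: "-1 \<notin> Zpsi" "1 \<notin> Zpsi" using psi_roots(4) by auto
  have card: "card (insert (-1) (insert 1 Zpsi)) = n + 1"
    using fin nm psi_roots(3) n1 by simp
  have e: "(\<Prod>u\<in>insert (-1) (insert 1 Zpsi). [:-u, 1:]) = smult (-1 / lead_coeff \<psi>) ([:1, 0, -1:] * \<psi>)"
  proof (rule poly_ext)
    fix t :: real
    define X where "X = (\<Prod>z\<in>Zpsi. t - z)"
    have ps: "poly \<psi> t = lead_coeff \<psi> * X" unfolding X_def
      by (subst psi_roots(1)) (simp add: poly_prod_lin)
    have L: "poly (\<Prod>u\<in>insert (-1) (insert 1 Zpsi). [:-u, 1:]) t = (t + 1) * ((t - 1) * X)"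
      unfolding poly_prod_lin X_def using fin nm by simp
    have "poly (smult (-1 / lead_coeff \<psi>) ([:1, 0, -1:] * \<psi>)) t = (-1 / lead_coeff \<psi>) * ((1 - t * t) * (lead_coeff \<psi> * X))"
      using ps by (simp add: algebra_simps)
    also have "\<dots> = - ((1 - t * t) * X)"
    proof -
      have l0: "lead_coeff \<psi> \<noteq> 0" using psi_lead by linarith
      have "(-1 / lead_coeff \<psi>) * ((1 - t * t) * (lead_coeff \<psi> * X)) = (-1 / lead_coeff \<psi> * lead_coeff \<psi>) * ((1 - t * t) * X)"
        by (simp only: ac_simps)
      also have "-1 / lead_coeff \<psi> * lead_coeff \<psi> = -1" using l0 by simp
      finally show ?thesis by simp
    qed
    finally show "poly (\<Prod>u\<in>insert (-1) (insert 1 Zpsi). [:-u, 1:]) t = poly (smult (-1 / lead_coeff \<psi>) ([:1, 0, -1:] * \<psi>)) t"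
      unfolding L by (simp add: algebra_simps)
  qed
  show ?thesis unfolding Z
  proof (rule good_scaled[OF _ _ _ e])
    show "finite (insert (-1) (insert 1 Zpsi))" using fin by simp
    show "insert (-1) (insert 1 Zpsi) \<subseteq> {-1..1}" using psi_roots(4) by auto
    show "card (insert (-1) (insert 1 Zpsi)) \<le> n + 1" using card by simp
    fix h :: "real poly" assume "degree h < 2 * n - card (insert (-1) (insert 1 Zpsi))"
    then have "degree h < n - 1" using card by simp
    then show "Iw w ([:1, 0, -1:] * \<psi> * h) = 0" using psi_orth[of h] by (simp only: mult.assoc)
  qed
qed

lemma good_radau:
  assumes e: "e = -1 \<or> e = 1" and P0: "P \<noteq> 0"
    and ZP: "{t. poly P t = 0} \<subseteq> {-1<..<1}" "card {t. poly P t = 0} = n"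
      "P = smult (lead_coeff P) (\<Prod>z\<in>{t. poly P t = 0}. [:-z, 1:])"
    and orth: "\<And>h. degree h < n - 1 \<Longrightarrow> Iw w ([:1, -e:] * (P * h)) = 0"
  shows "good (insert e (zero_set P))"
proof -
  define Z where "Z = {t. poly P t = 0}"
  have Z': "zero_set P = Z" unfolding Z_def zero_set_def ..
  have fin: "finite Z" unfolding Z_def by (rule poly_roots_finite[OF P0])
  have nm: "e \<notin> Z" using ZP(1) e unfolding Z_def by auto
  have card: "card (insert e Z) = n + 1" using fin nm ZP(2) unfolding Z_def by simp
  have lP: "lead_coeff P \<noteq> 0" using P0 by simp
  have ee: "e * e = 1" using e by auto
  have eq: "(\<Prod>u\<in>insert e Z. [:-u, 1:]) = smult (- e / lead_coeff P) ([:1, -e:] * P)"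
  proof (rule poly_ext)
    fix t :: real
    define X where "X = (\<Prod>z\<in>Z. t - z)"
    have ps: "poly P t = lead_coeff P * X"
      unfolding Z_def X_def by (subst ZP(3)) (simp add: poly_prod_lin)
    have L: "poly (\<Prod>u\<in>insert e Z. [:-u, 1:]) t = (t - e) * X"
      unfolding poly_prod_lin X_def using fin nm by simp
    have "poly (smult (- e / lead_coeff P) ([:1, -e:] * P)) t = (- e / lead_coeff P) * ((1 - e * t) * (lead_coeff P * X))"
      using ps by (simp add: algebra_simps)
    also have "\<dots> = (- e * (1 - e * t)) * X" using lP by (simp add: field_simps)
    also have "- e * (1 - e * t) = t - e" using ee by (simp add: algebra_simps)
    finally show "poly (\<Prod>u\<in>insert e Z. [:-u, 1:]) t = poly (smult (- e / lead_coeff P) ([:1, -e:] * P)) t"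
      unfolding L by simp
  qed
  show ?thesis unfolding Z'
  proof (rule good_scaled[OF _ _ _ eq])
    show "finite (insert e Z)" using fin by simp
    show "insert e Z \<subseteq> {-1..1}" using ZP(1) e unfolding Z_def by auto
    show "card (insert e Z) \<le> n + 1" using card by simp
    fix h :: "real poly" assume "degree h < 2 * n - card (insert e Z)"
    then have "degree h < n - 1" using card by simp
    then show "Iw w ([:1, -e:] * P * h) = 0" using orth[of h] by (simp only: mult.assoc)
  qed
qed

end

context qs begin

lemma lin_psi:
  assumes "c \<noteq> 0"
  shows "degree ([:1, c:] * \<psi>) = n" "coeff ([:1, c:] * \<psi>) n = c * lead_coeff \<psi>"
proof -
  have "degree ([:1, c:] * \<psi>) = degree [:1, c:] + degree \<psi>"
    by (rule degree_mult_eq) (use assms psi0 in auto)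
  then show d: "degree ([:1, c:] * \<psi>) = n" using assms psi_deg n1 by simp
  have "lead_coeff ([:1, c:] * \<psi>) = lead_coeff [:1, c:] * lead_coeff \<psi>" by (rule lead_coeff_mult)
  then show "coeff ([:1, c:] * \<psi>) n = c * lead_coeff \<psi>" using d assms by simp
qed

lemma minus_pow: "(-1::real)^n = - ((-1)^(n-1))"
proof -
  obtain k where "n = Suc k" using n1 by (cases n) auto
  then show ?thesis by simp
qed

lemma P_nonneg: "a \<ge> 0 \<Longrightarrow> P_poly w n a = \<phi> - smult a ([:1, -1:] * \<psi>)"
  unfolding P_poly_def phi_poly_def psi_poly_def by simp

lemma P_neg: "a < 0 \<Longrightarrow> P_poly w n a = \<phi> - smult a ([:1, 1:] * \<psi>)"
  unfolding P_poly_def phi_poly_def psi_poly_def by simp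

lemma P_deg:
  assumes "c = -1 \<or> c = 1" "c * a \<le> 0"
  defines "P \<equiv> \<phi> - smult a ([:1, c:] * \<psi>)"
  shows "P \<noteq> 0" "degree P = n"
proof -
  have c0: "c \<noteq> 0" using assms(1) by auto
  have dP: "degree P \<le> n" unfolding P_def
    by (rule degree_diff_le) (use phi_deg lin_psi[OF c0] in \<open>auto intro: order.trans[OF degree_smult_le]\<close>)
  have "coeff P n = lead_coeff \<phi> - a * (c * lead_coeff \<psi>)" unfolding P_def using lin_psi[OF c0] phi_deg by simp
  also have "\<dots> > 0"
  proof -
    have "a * (c * lead_coeff \<psi>) = (c * a) * lead_coeff \<psi>" by simp
    also have "\<dots> \<le> 0" using assms(2) psi_lead by (simp add: mult_nonpos_nonneg)
    finally show ?thesis using phi_lead by linarith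
  qed
  finally have cn: "coeff P n \<noteq> 0" by simp
  then show "P \<noteq> 0" by auto
  show "degree P = n" using dP cn le_degree[of P n] by simp
qed

lemma P_orth:
  assumes "c = -1 \<or> c = 1" "degree h < n - 1"
  shows "Iw w ([:1, -c:] * ((\<phi> - smult a ([:1, c:] * \<psi>)) * h)) = 0"
proof -
  have eq: "[:1, -c:] * ((\<phi> - smult a ([:1, c:] * \<psi>)) * h) = \<phi> * ([:1, -c:] * h) - smult a ([:1, 0, -1:] * (\<psi> * h))"
  proof (rule poly_ext)
    fix t
    have cc: "c * c = 1" using assms(1) by auto
    have "(1 - c * t) * (1 + c * t) = 1 - t * t" using cc by (simp add: algebra_simps)
    then show "poly ([:1, -c:] * ((\<phi> - smult a ([:1, c:] * \<psi>)) * h)) t = poly (\<phi> * ([:1, -c:] * h) - smult a ([:1, 0, -1:] * (\<psi> * h))) t"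
      by (simp add: algebra_simps) (metis (no_types, opaque_lifting) mult.assoc mult.left_commute)
  qed
  have d1: "degree ([:1, -c:] * h) < n"
  proof -
    have "degree ([:1, -c:] * h) \<le> degree [:1, -c::real:] + degree h" by (rule degree_mult_le)
    moreover have "degree [:1, -c::real:] \<le> 1" by simp
    ultimately show ?thesis using assms(2) by linarith
  qed
  show ?thesis unfolding eq
    using phi_orth[OF d1] psi_orth[OF assms(2)]
    by (simp add: wt.I_diff[OF wt_w] wt.I_smult[OF wt_w])
qed

lemma P_roots:
  assumes "c = -1 \<or> c = 1" "c * a \<le> 0"
  defines "P \<equiv> \<phi> - smult a ([:1, c:] * \<psi>)"
  shows "{t. poly P t = 0} \<subseteq> {-1<..<1}" "card {t. poly P t = 0} = n"
    "P = smult (lead_coeff P) (\<Prod>z\<in>{t. poly P t = 0}. [:-z, 1:])"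
proof -
  note PD = P_deg[OF assms(1,2), folded P_def]
  have V: "wt (\<lambda>t. poly [:1, -c:] t * w t)" using assms(1) wt_Wp wt_Wm by auto
  have orth: "Iw (\<lambda>t. poly [:1, -c:] t * w t) (P * q) = 0" if "degree q < n - 1" for q
    unfolding I_transfer P_def by (rule P_orth[OF assms(1) that])
  have s1: "poly P 1 > 0"
  proof -
    have "poly P 1 = poly \<phi> 1 - a * ((1 + c) * poly \<psi> 1)" unfolding P_def by (simp add: algebra_simps)
    moreover have "a * ((1 + c) * poly \<psi> 1) \<le> 0"
    proof (cases "c = 1")
      case True
      then have "a \<le> 0" using assms(2) by simp
      then show ?thesis using True psi_signs(1) by (simp add: mult_nonpos_nonneg)
    next
      case False then have "c = -1" using assms(1) by simp
      then show ?thesis by simp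
    qed
    ultimately show ?thesis using phi_signs(1) by linarith
  qed
  have s2: "(-1)^n * poly P (-1) > 0"
  proof -
    have "(-1)^n * poly P (-1) = (-1)^n * poly \<phi> (-1) - a * ((1 - c) * ((-1)^n * poly \<psi> (-1)))"
      unfolding P_def by (simp add: algebra_simps)
    also have "(-1)^n * poly \<psi> (-1) = - ((-1)^(n-1) * poly \<psi> (-1))" by (simp add: minus_pow)
    finally have e: "(-1)^n * poly P (-1) = (-1)^n * poly \<phi> (-1) + a * ((1 - c) * ((-1)^(n-1) * poly \<psi> (-1)))"
      by simp
    have "a * ((1 - c) * ((-1)^(n-1) * poly \<psi> (-1))) \<ge> 0"
    proof (cases "c = -1")
      case True
      then have "a \<ge> 0" using assms(2) by simp
      then show ?thesis using True psi_signs(2) by simp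
    next
      case False then have "c = 1" using assms(1) by simp
      then show ?thesis by simp
    qed
    then show ?thesis unfolding e using phi_signs(2) by linarith
  qed
  show "{t. poly P t = 0} \<subseteq> {-1<..<1}" "card {t. poly P t = 0} = n"
    "P = smult (lead_coeff P) (\<Prod>z\<in>{t. poly P t = 0}. [:-z, 1:])"
    using radau_roots[OF V PD orth s1 s2] by auto
qed

lemma good_P_pos: "0 < a \<Longrightarrow> good (insert (-1) (zero_set (P_poly w n a)))"
proof -
  assume a: "0 < a"
  have c: "(-1::real) = -1 \<or> (-1::real) = 1" by simp
  have ca: "(-1) * a \<le> 0" using a by simp
  have eq: "P_poly w n a = \<phi> - smult a ([:1, -1:] * \<psi>)" using a by (simp add: P_nonneg)
  show ?thesis unfolding eq
  proof (rule good_radau)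
    show "-1 = -1 \<or> (-1::real) = 1" by simp
    show "\<phi> - smult a ([:1, -1:] * \<psi>) \<noteq> 0" using P_deg[OF c ca] by simp
    show "{t. poly (\<phi> - smult a ([:1, -1:] * \<psi>)) t = 0} \<subseteq> {-1<..<1}"
      "card {t. poly (\<phi> - smult a ([:1, -1:] * \<psi>)) t = 0} = n"
      "\<phi> - smult a ([:1, -1:] * \<psi>) = smult (lead_coeff (\<phi> - smult a ([:1, -1:] * \<psi>)))
         (\<Prod>z\<in>{t. poly (\<phi> - smult a ([:1, -1:] * \<psi>)) t = 0}. [:-z, 1:])"
      using P_roots[OF c ca] by auto
    fix h :: "real poly" assume "degree h < n - 1"
    then show "Iw w ([:1, - (-1):] * ((\<phi> - smult a ([:1, -1:] * \<psi>)) * h)) = 0"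
      using P_orth[OF c, of h a] by simp
  qed
qed

lemma good_P_neg: "a < 0 \<Longrightarrow> good (insert 1 (zero_set (P_poly w n a)))"
proof -
  assume a: "a < 0"
  have c: "(1::real) = -1 \<or> (1::real) = 1" by simp
  have ca: "1 * a \<le> 0" using a by simp
  have eq: "P_poly w n a = \<phi> - smult a ([:1, 1:] * \<psi>)" using a by (simp add: P_neg)
  show ?thesis unfolding eq
  proof (rule good_radau)
    show "1 = -1 \<or> (1::real) = 1" by simp
    show "\<phi> - smult a ([:1, 1:] * \<psi>) \<noteq> 0" using P_deg[OF c ca] by simp
    show "{t. poly (\<phi> - smult a ([:1, 1:] * \<psi>)) t = 0} \<subseteq> {-1<..<1}"
      "card {t. poly (\<phi> - smult a ([:1, 1:] * \<psi>)) t = 0} = n"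
      "\<phi> - smult a ([:1, 1:] * \<psi>) = smult (lead_coeff (\<phi> - smult a ([:1, 1:] * \<psi>)))
         (\<Prod>z\<in>{t. poly (\<phi> - smult a ([:1, 1:] * \<psi>)) t = 0}. [:-z, 1:])"
      using P_roots[OF c ca] by auto
    fix h :: "real poly" assume "degree h < n - 1"
    then show "Iw w ([:1, - 1:] * ((\<phi> - smult a ([:1, 1:] * \<psi>)) * h)) = 0"
      using P_orth[OF c, of h a] by simp
  qed
qed

lemma node_sets_good: "S \<in> node_sets w n \<Longrightarrow> good S"
  unfolding node_sets_def using good_gauss good_lobatto good_P_pos good_P_neg
  by (auto simp: phi_poly_def psi_poly_def)

end

context qs begin

lemma poly_P_nonneg: "a \<ge> 0 \<Longrightarrow> poly (P_poly w n a) x = poly \<phi> x - a * ((1 - x) * poly \<psi> x)"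
  by (simp add: P_nonneg algebra_simps)

lemma poly_P_neg: "a < 0 \<Longrightarrow> poly (P_poly w n a) x = poly \<phi> x - a * ((1 + x) * poly \<psi> x)"
  by (simp add: P_neg algebra_simps)

definition fS :: "real \<Rightarrow> real set" where
  "fS x = (if poly \<psi> x = 0 then zero_set ([:1, 0, -1:] * \<psi>)
           else if poly \<phi> x = 0 then zero_set \<phi>
           else if poly \<phi> x / poly \<psi> x > 0 then insert (-1) (zero_set (P_poly w n (poly \<phi> x / ((1 - x) * poly \<psi> x))))
           else insert 1 (zero_set (P_poly w n (poly \<phi> x / ((1 + x) * poly \<psi> x)))))"

lemma fS_in:
  assumes x: "x \<in> {-1<..<1}"
  shows "fS x \<in> node_sets w n" "x \<in> fS x"
proof -
  have x1: "0 < 1 - x" "0 < 1 + x" using x by auto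
  have "fS x \<in> node_sets w n \<and> x \<in> fS x"
  proof (cases "poly \<psi> x = 0")
    case True
    then show ?thesis unfolding fS_def node_sets_def zero_set_def by (simp add: phi_poly_def psi_poly_def)
  next
    case p0: False
    show ?thesis
    proof (cases "poly \<phi> x = 0")
      case True
      then show ?thesis using p0 unfolding fS_def node_sets_def zero_set_def by (simp add: phi_poly_def psi_poly_def)
    next
      case f0: False
      show ?thesis
      proof (cases "poly \<phi> x / poly \<psi> x > 0")
        case True
        define a where "a = poly \<phi> x / ((1 - x) * poly \<psi> x)"
        have "a = (poly \<phi> x / poly \<psi> x) / (1 - x)" unfolding a_def by (simp add: field_simps)
        moreover have "(poly \<phi> x / poly \<psi> x) / (1 - x) > 0" by (rule divide_pos_pos) (use True x1 in auto)
        ultimately have a: "a > 0" by simp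
        have nz: "(1 - x) * poly \<psi> x \<noteq> 0" using p0 x1 by simp
        have "a * ((1 - x) * poly \<psi> x) = poly \<phi> x" unfolding a_def using nz by simp
        then have "poly (P_poly w n a) x = 0" using poly_P_nonneg[of a x] a by simp
        then show ?thesis using p0 f0 True a unfolding fS_def node_sets_def zero_set_def a_def
          by (auto simp: phi_poly_def psi_poly_def)
      next
        case False
        define a where "a = poly \<phi> x / ((1 + x) * poly \<psi> x)"
        have "poly \<phi> x / poly \<psi> x \<noteq> 0" using f0 p0 by simp
        then have "poly \<phi> x / poly \<psi> x < 0" using False by linarith
        moreover have "a = (poly \<phi> x / poly \<psi> x) / (1 + x)" unfolding a_def by (simp add: field_simps)
        moreover have "(poly \<phi> x / poly \<psi> x) / (1 + x) < 0" by (rule divide_neg_pos) (use calculation(1) x1 in auto)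
        ultimately have a: "a < 0" by simp
        have nz: "(1 + x) * poly \<psi> x \<noteq> 0" using p0 x1 by simp
        have "a * ((1 + x) * poly \<psi> x) = poly \<phi> x" unfolding a_def using nz by simp
        then have "poly (P_poly w n a) x = 0" using poly_P_neg[OF a, of x] by simp
        then show ?thesis using p0 f0 False a unfolding fS_def node_sets_def zero_set_def a_def
          by (auto simp: phi_poly_def psi_poly_def)
      qed
    qed
  qed
  then show "fS x \<in> node_sets w n" "x \<in> fS x" by auto
qed

lemma fS_unique:
  assumes x: "x \<in> {-1<..<1}" and S: "S \<in> node_sets w n" "x \<in> S"
  shows "S = fS x"
proof -
  have x1: "0 < 1 - x" "0 < 1 + x" "x \<noteq> -1" "x \<noteq> 1" using x by auto
  have nc: "\<not> (poly \<phi> x = 0 \<and> poly \<psi> x = 0)" by (rule no_common_root)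
  from S(1) consider "S = zero_set \<phi>" | "S = zero_set ([:1, 0, -1:] * \<psi>)"
    | a where "0 < a" "S = insert (-1) (zero_set (P_poly w n a))"
    | a where "a < 0" "S = insert 1 (zero_set (P_poly w n a))"
    unfolding node_sets_def by (auto simp: phi_poly_def psi_poly_def)
  then show ?thesis
  proof cases
    case 1
    then have "poly \<phi> x = 0" using S(2) unfolding zero_set_def by simp
    then show ?thesis using 1 nc unfolding fS_def by auto
  next
    case 2
    then have "(1 - x) * (1 + x) * poly \<psi> x = 0" using S(2) unfolding zero_set_def by (simp add: algebra_simps)
    then have "poly \<psi> x = 0" using x1 by simp
    then show ?thesis using 2 unfolding fS_def by auto
  next
    case (3 a)
    then have e: "poly \<phi> x = a * ((1 - x) * poly \<psi> x)"
      using S(2) poly_P_nonneg[of a x] x1 unfolding zero_set_def by auto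
    have p0: "poly \<psi> x \<noteq> 0" using e nc by auto
    have f0: "poly \<phi> x \<noteq> 0" using e p0 x1 3 by simp
    have r: "poly \<phi> x / poly \<psi> x = a * (1 - x)" using e p0 by simp
    then have pos: "poly \<phi> x / poly \<psi> x > 0" using 3 x1 by simp
    have nz: "(1 - x) * poly \<psi> x \<noteq> 0" using p0 x1 by simp
    have "poly \<phi> x / ((1 - x) * poly \<psi> x) = a" unfolding e using nz by simp
    then show ?thesis using 3 p0 f0 pos unfolding fS_def by simp
  next
    case (4 a)
    then have e: "poly \<phi> x = a * ((1 + x) * poly \<psi> x)"
      using S(2) poly_P_neg[of a x] x1 unfolding zero_set_def by auto
    have p0: "poly \<psi> x \<noteq> 0" using e nc by auto
    have f0: "poly \<phi> x \<noteq> 0" using e p0 x1 4 by simp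
    have r: "poly \<phi> x / poly \<psi> x = a * (1 + x)" using e p0 by simp
    then have neg: "\<not> poly \<phi> x / poly \<psi> x > 0" using 4 x1 by (simp add: mult_neg_pos not_less less_imp_le)
    have nz: "(1 + x) * poly \<psi> x \<noteq> 0" using p0 x1 by simp
    have "poly \<phi> x / ((1 + x) * poly \<psi> x) = a" unfolding e using nz by simp
    then show ?thesis using 4 p0 f0 neg unfolding fS_def by simp
  qed
qed

lemma Sigma_eq: "x \<in> {-1<..<1} \<Longrightarrow> Sigma w n x = fS x"
  unfolding Sigma_def
  by (rule the_equality) (use fS_in fS_unique in auto)

lemma Sigma_good: "x \<in> {-1<..<1} \<Longrightarrow> good (Sigma w n x)"
  using Sigma_eq fS_in node_sets_good by simp

end

interpretation one: wt "\<lambda>_::real. 1::real"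
proof
  show "set_integrable lborel {-1..1::real} (\<lambda>_. 1::real)"
    by (rule borel_integrable_atLeastAtMost') simp
qed auto

abbreviation J :: "real poly \<Rightarrow> real" where "J \<equiv> Iw (\<lambda>_. 1)"

lemma J_deriv: "J (pderiv f) = poly f 1 - poly f (-1)"
proof -
  have "J (pderiv f) = integral\<^sup>L lborel (\<lambda>x. indicator {-1..1::real} x *\<^sub>R poly (pderiv f) x)"
    unfolding Iw_def wint_def set_lebesgue_integral_def by simp
  also have "\<dots> = poly f 1 - poly f (-1)"
  proof (rule integral_FTC_atLeastAtMost)
    fix x :: real
    show "((\<lambda>x. poly f x) has_vector_derivative poly (pderiv f) x) (at x within {-1..1})"
      unfolding has_real_derivative_iff_has_vector_derivative[symmetric]
      by (rule DERIV_subset[OF poly_DERIV]) simp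
  qed (auto intro: continuous_intros)
  finally show ?thesis .
qed

lemma J_parts: "J (pderiv f * g) = poly f 1 * poly g 1 - poly f (-1) * poly g (-1) - J (f * pderiv g)"
proof -
  have "J (pderiv (f * g)) = J (f * pderiv g) + J (pderiv f * g)"
    by (simp add: pderiv_mult one.I_add mult.commute)
  then show ?thesis using J_deriv[of "f * g"] by simp
qed

lemma D_Suc: "(pderiv ^^ Suc k) p = pderiv ((pderiv ^^ k) p)" by simp
lemma D_Suc': "(pderiv ^^ Suc k) p = (pderiv ^^ k) (pderiv p)" by (simp add: funpow_swap1)

lemma coeff_D: "coeff ((pderiv ^^ k) p) i = pochhammer (of_nat (Suc i)) k * coeff (p :: real poly) (i + k)"
proof (induction k arbitrary: i)
  case 0 then show ?case by simp
next
  case (Suc k)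
  have "coeff ((pderiv ^^ Suc k) p) i = of_nat (Suc i) * coeff ((pderiv ^^ k) p) (Suc i)"
    by (simp add: coeff_pderiv)
  also have "\<dots> = of_nat (Suc i) * (pochhammer (of_nat (Suc (Suc i))) k * coeff p (Suc i + k))"
    using Suc by simp
  also have "pochhammer (of_nat (Suc i) :: real) (Suc k) = of_nat (Suc i) * pochhammer (of_nat (Suc (Suc i))) k"
    by (simp add: pochhammer_rec)
  ultimately show ?case by simp
qed

lemma D_zero: "degree (p :: real poly) < k \<Longrightarrow> (pderiv ^^ k) p = 0"
  by (rule poly_eqI) (simp add: coeff_D coeff_eq_0)

lemma D_top: "(pderiv ^^ degree p) (p :: real poly) = [: fact (degree p) * lead_coeff p :]"
proof (rule poly_eqI)
  fix i
  show "coeff ((pderiv ^^ degree p) p) i = coeff [: fact (degree p) * lead_coeff p :] i"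
  proof (cases i)
    case 0 then show ?thesis by (simp add: coeff_D pochhammer_fact)
  next
    case (Suc i') then show ?thesis by (simp add: coeff_D coeff_eq_0)
  qed
qed

lemma D_add: "(pderiv ^^ k) (p + q) = (pderiv ^^ k) p + (pderiv ^^ k) (q :: real poly)"
  by (induction k) (auto simp: pderiv_add)

lemma D_smult: "(pderiv ^^ k) (smult c p) = smult c ((pderiv ^^ k) (p :: real poly))"
  by (induction k) (auto simp: pderiv_smult)

lemma degree_D: "degree ((pderiv ^^ k) p) = degree (p :: real poly) - k"
proof (induction k)
  case (Suc k)
  have "degree (pderiv ((pderiv ^^ k) p)) = degree ((pderiv ^^ k) p) - 1" by (rule degree_pderiv)
  then show ?case using Suc by simp
qed simp

lemma dvd_pderiv_lin: "[:-a, 1:] ^ Suc k dvd (p :: real poly) \<Longrightarrow> [:-a, 1:] ^ k dvd pderiv p"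
proof -
  assume "[:-a, 1:] ^ Suc k dvd p"
  then obtain q where q: "p = [:-a, 1:] ^ Suc k * q" by (auto elim: dvdE)
  have "pderiv p = [:- a, 1:] ^ Suc k * pderiv q + smult (of_nat (Suc k)) (q * [:- a, 1:] ^ k)"
    unfolding q by (rule lemma_order_pderiv1)
  also have "\<dots> = [:-a, 1:] ^ k * ([:-a, 1:] * pderiv q + smult (of_nat (Suc k)) q)"
    by (simp add: algebra_simps)
  finally show ?thesis by simp
qed

lemma D_vanish:
  assumes "i < k" "[:-a, 1:] ^ k dvd (p :: real poly)"
  shows "poly ((pderiv ^^ i) p) a = 0"
  using assms
proof (induction i arbitrary: k p)
  case 0
  then obtain k' where "k = Suc k'" by (cases k) auto
  then have "[:-a, 1:] dvd p" using 0 by (meson dvd_power dvd_trans zero_less_Suc)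
  then show ?case by (simp add: poly_eq_0_iff_dvd)
next
  case (Suc i)
  then obtain k' where k': "k = Suc k'" by (cases k) auto
  have "[:-a, 1:] ^ k' dvd pderiv p" using Suc(3) k' dvd_pderiv_lin by blast
  then have "poly ((pderiv ^^ i) (pderiv p)) a = 0" using Suc k' by simp
  then show ?case by (simp only: D_Suc')
qed

lemma parts_iter:
  assumes van: "\<And>i. i < k \<Longrightarrow> poly ((pderiv ^^ i) F) 1 = 0 \<and> poly ((pderiv ^^ i) F) (-1) = 0"
  shows "i \<le> k \<Longrightarrow> J ((pderiv ^^ k) F * g) = (-1)^i * J ((pderiv ^^ (k - i)) F * (pderiv ^^ i) g)"
proof (induction i)
  case 0 then show ?case by simp
next
  case (Suc i)
  have ki: "k - i = Suc (k - Suc i)" using Suc(2) by simp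
  let ?A = "(pderiv ^^ (k - Suc i)) F"
  have v: "poly ?A 1 = 0" "poly ?A (-1) = 0" using van[of "k - Suc i"] Suc(2) by auto
  have "J ((pderiv ^^ (k - i)) F * (pderiv ^^ i) g) = J (pderiv ?A * (pderiv ^^ i) g)"
    unfolding ki D_Suc ..
  also have "\<dots> = - J (?A * (pderiv ^^ Suc i) g)"
    using J_parts[of ?A "(pderiv ^^ i) g"] v by simp
  finally show ?case using Suc by simp
qed

definition G :: "nat \<Rightarrow> real poly" where "G j = [:-1, 0, 1:] ^ j"
definition Lg :: "nat \<Rightarrow> real poly" where "Lg j = (pderiv ^^ j) (G j)"

lemma G_split: "G j = [:-1, 1:] ^ j * [:1, 1:] ^ j"
proof -
  have "[:-1, 0, 1:] = [:-1, 1:] * [:1, 1::real:]" by simp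
  then show ?thesis unfolding G_def by (simp only: power_mult_distrib)
qed

lemma G_vanish: "i < j \<Longrightarrow> poly ((pderiv ^^ i) (G j)) 1 = 0 \<and> poly ((pderiv ^^ i) (G j)) (-1) = 0"
proof -
  assume ij: "i < j"
  have "[:-1, 1:] ^ j dvd G j" unfolding G_split by simp
  moreover have "[:-(-1), 1:] ^ j dvd G j" unfolding G_split by simp
  ultimately show ?thesis using D_vanish[OF ij] by blast
qed

lemma G_deg: "degree (G j) = 2 * j"
  unfolding G_def by (simp add: degree_power_eq)

lemma G_lead: "lead_coeff (G j) = 1"
  unfolding G_def by (simp add: lead_coeff_power)

lemma Lg_deg: "degree (Lg j) = j"
  unfolding Lg_def degree_D G_deg by simp

lemma Lg_parts: "J (Lg j * g) = (-1)^j * J (G j * (pderiv ^^ j) g)"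
  unfolding Lg_def using parts_iter[of j "G j" j g] G_vanish by simp

lemma Lg_orth: "degree g < j \<Longrightarrow> J (Lg j * g) = 0"
  unfolding Lg_parts by (simp add: D_zero)

lemma Lg_norm: "J (Lg j * Lg j) = (-1)^j * fact (2 * j) * J (G j)"
proof -
  have "(pderiv ^^ j) (Lg j) = (pderiv ^^ (j + j)) (G j)" unfolding Lg_def by (simp add: funpow_add)
  also have "j + j = degree (G j)" using G_deg by simp
  also have "(pderiv ^^ degree (G j)) (G j) = [: fact (2 * j) :]" using D_top[of "G j"] G_lead G_deg by simp
  finally show ?thesis unfolding Lg_parts by (simp add: one.I_smult flip: smult_one)
qed

lemma D_lin_power: "poly ((pderiv ^^ j) ([:-a, 1:] ^ j * h)) a = fact j * poly (h :: real poly) a"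
proof (induction j arbitrary: h)
  case 0 then show ?case by simp
next
  case (Suc j)
  have "pderiv ([:-a, 1:] ^ Suc j * h) = [:-a, 1:] ^ Suc j * pderiv h + smult (of_nat (Suc j)) (h * [:-a, 1:] ^ j)"
    by (rule lemma_order_pderiv1)
  also have "[:-a, 1:] ^ Suc j * pderiv h = [:-a, 1:] ^ j * ([:-a, 1:] * pderiv h)"
    by (simp only: power_Suc2 mult.assoc)
  also have "smult (of_nat (Suc j)) (h * [:-a, 1:] ^ j) = [:-a, 1:] ^ j * smult (of_nat (Suc j)) h"
    by (simp only: mult_smult_right mult_smult_left mult.commute)
  finally have "pderiv ([:-a, 1:] ^ Suc j * h) = [:-a, 1:] ^ j * ([:-a, 1:] * pderiv h) + [:-a, 1:] ^ j * smult (of_nat (Suc j)) h" .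
  then have "poly ((pderiv ^^ Suc j) ([:-a, 1:] ^ Suc j * h)) a
      = poly ((pderiv ^^ j) ([:-a, 1:] ^ j * ([:-a, 1:] * pderiv h))) a + poly ((pderiv ^^ j) ([:-a, 1:] ^ j * smult (of_nat (Suc j)) h)) a"
    by (simp only: D_Suc' D_add poly_add)
  then show ?case using Suc by (simp add: D_smult)
qed


lemma Lg_val:
  assumes "e = 1 \<or> e = -1"
  shows "(poly (Lg j) e)^2 = (fact j)^2 * 4^j"
proof (cases "e = 1")
  case True
  have "poly (Lg j) 1 = fact j * 2^j"
    unfolding Lg_def G_split using D_lin_power[of j 1 "[:1, 1:]^j"] by simp
  moreover have "(2::real)^j * 2^j = 4^j" by (subst power_mult_distrib[symmetric]) simp
  ultimately show ?thesis using True by (simp add: power2_eq_square algebra_simps)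
next
  case False
  then have e: "e = -1" using assms by simp
  have "G j = [:-(-1), 1:]^j * [:-1, 1:]^j" unfolding G_split by (simp add: mult.commute)
  then have "poly (Lg j) (-1) = fact j * (-2)^j"
    unfolding Lg_def using D_lin_power[of j "-1" "[:-1, 1:]^j"] by simp
  moreover have "(-2::real)^j * (-2)^j = 4^j" by (subst power_mult_distrib[symmetric]) simp
  ultimately show ?thesis using e by (simp add: power2_eq_square algebra_simps)
qed

lemma J_one: "J 1 = 2"
proof -
  have "pderiv [:0, 1::real:] = 1" by (simp add: pderiv_pCons)
  then show ?thesis using J_deriv[of "[:0, 1:]"] by simp
qed

lemma G_rec: "J (G (Suc j)) * (2 * j + 3) = - (2 * j + 2) * J (G j)"
proof -
  have v: "poly (G (Suc j)) 1 = 0" "poly (G (Suc j)) (-1) = 0" unfolding G_def by simp_all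
  have "J (G (Suc j)) = J (pderiv [:0, 1:] * G (Suc j))" by (simp add: pderiv_pCons)
  also have "\<dots> = - J ([:0, 1:] * pderiv (G (Suc j)))" using J_parts[of "[:0, 1:]" "G (Suc j)"] v by simp
  also have "[:0, 1:] * pderiv (G (Suc j)) = smult (2 * (real j + 1)) (G (Suc j) + G j)"
  proof (rule poly_ext)
    fix t :: real
    have "pderiv (G (Suc j)) = smult (of_nat (Suc j)) (G j) * pderiv [:-1, 0, 1:]"
      unfolding G_def by (rule pderiv_power_Suc)
    moreover have "pderiv [:-1, 0, 1::real:] = [:0, 2:]" by (simp add: pderiv_pCons)
    ultimately have "poly ([:0, 1:] * pderiv (G (Suc j))) t = t * ((real j + 1) * poly (G j) t * (2 * t))"
      by simp
    also have "\<dots> = 2 * (real j + 1) * ((t * t - 1) * poly (G j) t + poly (G j) t)" by (simp add: algebra_simps)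
    also have "(t * t - 1) * poly (G j) t = poly (G (Suc j)) t" unfolding G_def by (simp add: algebra_simps)
    finally show "poly ([:0, 1:] * pderiv (G (Suc j))) t = poly (smult (2 * (real j + 1)) (G (Suc j) + G j)) t"
      by simp
  qed
  finally have "J (G (Suc j)) = - (2 * (real j + 1)) * (J (G (Suc j)) + J (G j))"
    by (simp add: one.I_smult one.I_add algebra_simps)
  then show ?thesis by (simp add: algebra_simps)
qed

lemma G_int: "(-1)^j * J (G j) = 2 * 4^j * (fact j)^2 / fact (2 * j + 1)"
proof (induction j)
  case 0
  then show ?case by (simp add: G_def J_one)
next
  case (Suc j)
  have A: "J (G (Suc j)) = - ((2 * j + 2) / (2 * j + 3)) * J (G j)"
    using G_rec[of j] by (simp add: field_simps)
  have "(-1)^Suc j * J (G (Suc j)) = (2 * j + 2) / (2 * j + 3) * ((-1)^j * J (G j))"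
    unfolding A power_Suc by (simp add: ac_simps)
  also have "\<dots> = (2 * j + 2) / (2 * j + 3) * (2 * 4^j * (fact j)^2 / fact (2 * j + 1))" using Suc by simp
  also have "\<dots> = 2 * 4^Suc j * (fact (Suc j))^2 / fact (2 * Suc j + 1)"
  proof -
    have aux: "F > 0 \<Longrightarrow> x \<ge> 0 \<Longrightarrow> (2 * x + 2) / (2 * x + 3) * (2 * P * g^2 / F)
        = 2 * (4 * P) * ((x + 1) * g)^2 / ((2 * x + 3) * (2 * x + 2) * F)" for F x P g :: real
    proof -
      assume h: "F > 0" "x \<ge> 0"
      have n: "2 * x + 3 \<noteq> 0" "2 * x + 2 \<noteq> 0" "F \<noteq> 0" using h by auto
      have "(2 * x + 2) / (2 * x + 3) * (2 * P * g^2 / F) = ((2 * x + 2) * (2 * P * g^2)) / ((2 * x + 3) * F)"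
        by simp
      also have "\<dots> = ((2 * x + 2) * (2 * x + 2) * (2 * P * g^2)) / ((2 * x + 3) * (2 * x + 2) * F)"
        using n by simp
      also have "(2 * x + 2) * (2 * x + 2) * (2 * P * g^2) = 2 * (4 * P) * ((x + 1) * g)^2"
        by (simp add: power2_eq_square algebra_simps)
      finally show ?thesis .
    qed
    have f: "fact (2 * Suc j + 1) = (2 * real j + 3) * (2 * real j + 2) * (fact (2 * j + 1) :: real)"
    proof -
      have "2 * Suc j + 1 = Suc (Suc (2 * j + 1))" by simp
      then show ?thesis by (simp only: fact_Suc) (simp add: algebra_simps)
    qed
    have "fact (Suc j) = (real j + 1) * (fact j :: real)" by (simp add: algebra_simps)
    moreover have "(4::real)^Suc j = 4 * 4^j" by simp
    ultimately show ?thesis unfolding f using aux[of "fact (2 * j + 1)" "real j" "4^j" "fact j"] by (simp add: ac_simps)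
  qed
  finally show ?case .
qed

definition Nn :: "nat \<Rightarrow> real" where "Nn j = J (Lg j * Lg j)"

lemma Nn_eq: "Nn j = 2 * 4^j * (fact j)^2 / (2 * j + 1)"
proof -
  have "Nn j = fact (2 * j) * ((-1)^j * J (G j))" unfolding Nn_def Lg_norm by simp
  also have "\<dots> = fact (2 * j) * (2 * 4^j * (fact j)^2 / fact (2 * j + 1))" by (simp add: G_int)
  also have "fact (2 * j + 1) = (2 * real j + 1) * (fact (2 * j) :: real)" by simp
  also have "fact (2 * j) * (2 * 4 ^ j * (fact j)\<^sup>2 / ((2 * real j + 1) * fact (2 * j))) = 2 * 4^j * (fact j)^2 / (2 * j + 1)"
  proof -
    have gen: "F \<noteq> 0 \<Longrightarrow> F * (Y / (a * F)) = Y / a" for F Y a :: real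
      by (cases "a = 0") (auto simp: field_simps)
    have "(fact (2 * j) :: real) \<noteq> 0" by simp
    from gen[OF this, of "2 * 4 ^ j * (fact j)\<^sup>2" "2 * real j + 1"] show ?thesis by simp
  qed
  finally show ?thesis by simp
qed

lemma Nn_pos: "Nn j > 0" unfolding Nn_eq by simp

lemma ratio: "e = 1 \<or> e = -1 \<Longrightarrow> (poly (Lg j) e)^2 / Nn j = (2 * j + 1) / 2"
  unfolding Nn_eq Lg_val by (simp add: field_simps)

lemma Lg_cross: "i \<noteq> j \<Longrightarrow> J (Lg i * Lg j) = 0"
proof (cases "i < j")
  case True
  then have "J (Lg j * Lg i) = 0" by (intro Lg_orth) (simp add: Lg_deg)
  then show ?thesis by (simp add: mult.commute)
next
  case False
  assume "i \<noteq> j"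
  then have "j < i" using False by simp
  then show ?thesis by (intro Lg_orth) (simp add: Lg_deg)
qed

lemma sum_odd: "(\<Sum>j<n. (2 * real j + 1) / 2) = real n ^ 2 / 2"
  by (induction n) (auto simp: field_simps power2_eq_square)

lemma christoffel:
  assumes "e = 1 \<or> e = -1" "1 \<le> n"
  shows "\<exists>q. degree q \<le> n - 1 \<and> poly q e = 1 \<and> J (q * q) = 2 / (real n)^2"
proof -
  define c where "c j = poly (Lg j) e / Nn j" for j
  define K where "K = (\<Sum>j<n. smult (c j) (Lg j))"
  have Lam: "(\<Sum>j<n. (poly (Lg j) e)^2 / Nn j) = real n ^ 2 / 2"
  proof -
    have "(\<Sum>j<n. (poly (Lg j) e)^2 / Nn j) = (\<Sum>j<n. (2 * real j + 1) / 2)"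
      by (rule sum.cong) (use ratio[OF assms(1)] in auto)
    then show ?thesis using sum_odd by simp
  qed
  have "K * K = (\<Sum>i<n. \<Sum>j<n. smult (c i * c j) (Lg i * Lg j))"
    unfolding K_def sum_product by (simp add: mult_smult_left mult_smult_right mult.commute)
  then have "J (K * K) = (\<Sum>i<n. \<Sum>j<n. c i * c j * J (Lg i * Lg j))"
    by (simp add: one.I_sum one.I_smult)
  also have "\<dots> = (\<Sum>i<n. c i * c i * Nn i)"
  proof (rule sum.cong)
    fix i assume "i \<in> {..<n}"
    have "(\<Sum>j<n. c i * c j * J (Lg i * Lg j)) = (\<Sum>j<n. if j = i then c i * c i * Nn i else 0)"
      by (rule sum.cong) (auto simp: Lg_cross Nn_def)
    then show "(\<Sum>j<n. c i * c j * J (Lg i * Lg j)) = c i * c i * Nn i" using \<open>i \<in> {..<n}\<close> by simp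
  qed simp
  also have "\<dots> = (\<Sum>j<n. (poly (Lg j) e)^2 / Nn j)"
    by (rule sum.cong) (use Nn_pos in \<open>auto simp: c_def power2_eq_square field_simps less_imp_neq[symmetric]\<close>)
  finally have JK: "J (K * K) = real n ^ 2 / 2" using Lam by simp
  have "poly K e = (\<Sum>j<n. c j * poly (Lg j) e)" unfolding K_def by (simp add: poly_sum)
  also have "\<dots> = (\<Sum>j<n. (poly (Lg j) e)^2 / Nn j)"
    by (rule sum.cong) (auto simp: c_def power2_eq_square)
  finally have PK: "poly K e = real n ^ 2 / 2" using Lam by simp
  have dK: "degree K \<le> n - 1" unfolding K_def
    by (rule degree_sum_le) (auto intro: order.trans[OF degree_smult_le] simp: Lg_deg)
  define q where "q = smult (2 / real n ^ 2) K"
  have n0: "real n \<noteq> 0" using assms by simp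
  have "degree q \<le> n - 1" unfolding q_def using dK by (meson degree_smult_le order.trans)
  moreover have "poly q e = 1" unfolding q_def using PK n0 by simp
  moreover have "J (q * q) = 2 / (real n)^2"
    unfolding q_def using JK n0 by (simp add: one.I_smult mult_smult_left mult_smult_right power2_eq_square field_simps)
  ultimately show ?thesis by blast
qed


context qs begin

lemma mM: "m \<le> M"
proof (rule ccontr)
  assume h: "\<not> m \<le> M"
  from ae have "AE t in lborel. t \<notin> {-1..1::real}"
    by eventually_elim (use h in auto)
  then have "emeasure lborel {-1..1::real} = 0"
    by (subst (asm) AE_iff_measurable[of "{-1..1::real}"]) auto
  then show False by simp
qed

lemma comp: "Iw w (q * q) \<le> M * J (q * q)"
proof -
  have i1: "set_integrable lborel {-1..1} (\<lambda>t. poly (q * q) t * w t)"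
    by (rule set_integrable_poly_mult[OF wint_w])
  have i2: "set_integrable lborel {-1..1} (\<lambda>t. poly (q * q) t * M)"
    by (rule set_integrable_poly_mult) (rule borel_integrable_atLeastAtMost', simp)
  have "Iw w (q * q) \<le> (LINT t:{-1..1}|lborel. poly (q * q) t * M)"
    unfolding Iw_def wint_def
  proof (rule set_integral_mono_AE[OF i1 i2])
    show "AE t\<in>{-1..1} in lborel. poly (q * q) t * w t \<le> poly (q * q) t * M"
      using ae
    proof eventually_elim
      case (elim t)
      show ?case
      proof
        assume "t \<in> {-1..1}"
        then have "w t \<le> M" using elim by auto
        moreover have "0 \<le> poly (q * q) t" by simp
        ultimately show "poly (q * q) t * w t \<le> poly (q * q) t * M" by (simp add: mult_left_mono)
      qed
    qed
  qed
  also have "(LINT t:{-1..1}|lborel. poly (q * q) t * M) = M * J (q * q)"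
    unfolding Iw_def wint_def by (simp add: mult.commute)
  finally show ?thesis .
qed

lemma lam_bound:
  assumes x: "x \<in> {-1<..<1}" and e: "e = -1 \<or> e = 1"
  shows "lambda_x w n x e \<le> 2 * M^2 / m * (1 / (real n)^2)"
proof -
  define S where "S = Sigma w n x"
  have g: "good S" unfolding S_def by (rule Sigma_good[OF x])
  then have S: "finite S" "S \<subseteq> {-1..1}" "card S \<le> n + 1" "qprops S (quad_weights w n S)"
    unfolding good_def by auto
  have lam: "lambda_x w n x e = quad_weights w n S e" unfolding lambda_x_def S_def ..
  have Mpos: "0 < M" using mM mpos by simp
  have bnd0: "0 \<le> 2 * M^2 / m * (1 / (real n)^2)" using mpos by simp
  show ?thesis
  proof (cases "e \<in> S")
    case False
    then have "quad_weights w n S e = 0" using S(4) unfolding qprops_def by auto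
    then show ?thesis using lam bnd0 by simp
  next
    case True
    have e': "e = 1 \<or> e = -1" using e by auto
    obtain q where q: "degree q \<le> n - 1" "poly q e = 1" "J (q * q) = 2 / (real n)^2"
      using christoffel[OF e' n1] by blast
    have "quad_weights w n S e * (poly q e)^2 \<le> Iw w (q * q)"
      by (rule endpoint_bound[OF S(1,2) True e S(3) S(4) q(1)])
    also have "\<dots> \<le> M * J (q * q)" by (rule comp)
    finally have "quad_weights w n S e \<le> M * (2 / (real n)^2)" using q by simp
    also have "\<dots> \<le> 2 * M^2 / m * (1 / (real n)^2)"
    proof -
      have "M \<le> M * M / m" using mM mpos Mpos by (simp add: field_simps)
      then have "M * (2 / (real n)^2) \<le> (M * M / m) * (2 / (real n)^2)"
        by (rule mult_right_mono) simp
      then show ?thesis by (simp add: power2_eq_square field_simps)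
    qed
    finally show ?thesis using lam by simp
  qed
qed

end

theorem lemma3p7:
  "\<exists>C>0. \<forall>(w :: real \<Rightarrow> real) (m :: real) (M :: real) (n :: nat) (x :: real).
     weight_function w \<and> 0 < m \<and>
     (AE t in lborel. t \<in> {-1..1} \<longrightarrow> m \<le> w t \<and> w t \<le> M) \<and>
     1 \<le> n \<and> -1 < x \<and> x < 1 \<longrightarrow>
       lambda_x w n x (-1) \<le> C * M^2 / m * (1 / (real n)^2) \<and>
       lambda_x w n x 1 \<le> C * M^2 / m * (1 / (real n)^2)"
proof (intro exI[of _ 2] conjI allI impI)
  show "(0::real) < 2" by simp
  fix w :: "real \<Rightarrow> real" and m M :: real and n :: nat and x :: real
  assume h: "weight_function w \<and> 0 < m \<and>
     (AE t in lborel. t \<in> {-1..1} \<longrightarrow> m \<le> w t \<and> w t \<le> M) \<and>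
     1 \<le> n \<and> -1 < x \<and> x < 1"
  then interpret qs w m M n by unfold_locales auto
  have x: "x \<in> {-1<..<1}" using h by auto
  show "lambda_x w n x (-1) \<le> 2 * M^2 / m * (1 / (real n)^2)" by (rule lam_bound[OF x]) simp
  show "lambda_x w n x 1 \<le> 2 * M^2 / m * (1 / (real n)^2)" by (rule lam_bound[OF x]) simp
qed


end
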